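(* Let $\ell$ be a positive integer. For $n\ge 1$ define the modified Nörlund polynomials $$B_n^{(\ell)*}=\sum_{r=0}^{n}\binom{n+r}{2r}\frac{B_r^{(\ell)}}{n+r},$$ where $B_r^{(\ell)}$ are the Nörlund polynomials given by $\sum_{r\ge0}B_r^{(\ell)}\frac{z^r}{r!}=\left(\frac{z}{e^z-1}\right)^{\ell}$. Then the generating function $F_{B^*}(z;\ell)=\sum_{n=1}^{\infty}B_n^{(\ell)*}z^n$, viewed as a formal power series in $z$ (with the right-hand side below understood through its expansion as $z\to0^+$), is given by $$F_{B^*}(z;\ell) = -\frac12\log z + \frac12\left[H_{\ell-1} - \frac{d^{\ell-1}}{dx^{\ell-1}}\left\{\binom{x-1}{\ell-1}\psi\!\left(x-\left\lfloor\tfrac{\ell}{2}\right\rfloor\right)\right\}\right]\Bigg|_{x=z+1/z+\ell-2}.$$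
   Context: $H_n$ is the $n$-th harmonic number ($H_0=0$), $\psi=\Gamma'/\Gamma$ is the digamma function, and $\binom{x}{n}=\frac{x(x-1)\cdots(x-n+1)}{n!}$ is the generalized binomial coefficient. *)

theory Defs
  imports "HOL-Analysis.Analysis" "HOL-Computational_Algebra.Formal_Power_Series"
    "HOL-Library.Landau_Symbols"
begin

text \<open>Here z/(e^z-1) is the inverse of
  the power series (e^z-1)/z = fps_shift 1 (E - 1), which has constant term 1.\<close>
definition norlund :: "nat \<Rightarrow> nat \<Rightarrow> real" where
  "norlund l r = fact r * fps_nth ((inverse (fps_shift 1 (fps_exp 1 - 1))) ^ l) r"

definition norlund_star :: "nat \<Rightarrow> nat \<Rightarrow> real" where
  "norlund_star l n = (\<Sum>r=0..n. real ((n + r) choose (2 * r)) * norlund l r / real (n + r))"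

definition rhs_fun :: "nat \<Rightarrow> real \<Rightarrow> real" where
  "rhs_fun l z = - ln z / 2 + (harm (l - 1)
     - (deriv ^^ (l - 1)) (\<lambda>x. ((x - 1) gchoose (l - 1)) * Digamma (x - real (l div 2)))
         (z + 1 / z + real l - 2)) / 2"

end

theory Submission
  imports Defs "HOL-Computational_Algebra.Polynomial_FPS"
begin

definition asx :: "(real \<Rightarrow> real) \<Rightarrow> real fps \<Rightarrow> bool" where
  "asx f F \<longleftrightarrow> (\<forall>K p. (\<forall>n\<le>K. coeff p n = fps_nth F n) \<longrightarrow>
      (\<lambda>t. f t - poly p t) \<in> O[at_right 0](\<lambda>t. t ^ Suc K))"

definition tp :: "real fps \<Rightarrow> nat \<Rightarrow> real poly" where
  "tp F K = (\<Sum>i\<le>K. monom (fps_nth F i) i)"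

lemma coeff_tp: "coeff (tp F K) n = (if n \<le> K then fps_nth F n else 0)"
  by (simp add: tp_def coeff_sum)

lemma poly_tp: "poly (tp F K) t = (\<Sum>i\<le>K. fps_nth F i * t ^ i)"
  by (simp add: tp_def poly_sum poly_monom)

lemma tendsto_bigo_1: "(f \<longlongrightarrow> (c::real)) F \<Longrightarrow> f \<in> O[F](\<lambda>_. 1)"
  by (rule bigoI_tendsto[where c=c]) auto

lemma poly_bigo_1: "(\<lambda>t. poly p (t::real)) \<in> O[at_right 0](\<lambda>_. 1)"
  by (rule tendsto_bigo_1[of _ "poly p 0"]) (intro tendsto_intros)

lemma t_bigo_1: "(\<lambda>t::real. t) \<in> O[at_right 0](\<lambda>_. 1)"
  by (rule tendsto_bigo_1[of _ 0]) (intro tendsto_intros)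

lemma tpow_mono_bigo: "m \<le> n \<Longrightarrow> (\<lambda>t::real. t ^ n) \<in> O[at_right 0](\<lambda>t. t ^ m)"
proof -
  assume "m \<le> n"
  then obtain k where n: "n = m + k" by (metis le_add_diff_inverse)
  have "(\<lambda>t::real. t ^ k) \<in> O[at_right 0](\<lambda>_. 1)"
    by (rule tendsto_bigo_1[of _ "0^k"]) (intro tendsto_intros)
  hence "(\<lambda>t::real. t^m * t ^ k) \<in> O[at_right 0](\<lambda>t. t^m * 1)"
    by (rule landau_o.big.mult_left)
  thus ?thesis by (simp add: n power_add)
qed

lemma poly_low_zero:
  assumes "\<forall>n\<le>K. coeff p n = (0::real)"
  shows "(\<lambda>t. poly p t) \<in> O[at_right 0](\<lambda>t. t ^ Suc K)"
proof -
  have "monom 1 (Suc K) dvd p" using assms by (auto simp: monom_1_dvd_iff')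
  then obtain q where q: "p = monom 1 (Suc K) * q" by (elim dvdE)
  have "(\<lambda>t. t^Suc K * poly q t) \<in> O[at_right 0](\<lambda>t. t^Suc K * 1)"
    by (rule landau_o.big.mult_left[OF poly_bigo_1])
  thus ?thesis by (simp add: q poly_monom)
qed

lemma asxI:
  assumes "\<And>K. \<exists>p. (\<forall>n\<le>K. coeff p n = fps_nth F n) \<and> (\<lambda>t. f t - poly p t) \<in> O[at_right 0](\<lambda>t. t ^ Suc K)"
  shows "asx f F"
  unfolding asx_def
proof (intro allI impI)
  fix K p' assume p': "\<forall>n\<le>K. coeff p' n = fps_nth F n"
  from assms obtain p where p: "\<forall>n\<le>K. coeff p n = fps_nth F n"
     "(\<lambda>t. f t - poly p t) \<in> O[at_right 0](\<lambda>t. t ^ Suc K)" by blast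
  have "(\<lambda>t. poly (p - p') t) \<in> O[at_right 0](\<lambda>t. t ^ Suc K)"
    by (rule poly_low_zero) (use p p' in simp)
  from sum_in_bigo(1)[OF p(2) this] 
  have "(\<lambda>t. (f t - poly p t) + poly (p - p') t) \<in> O[at_right 0](\<lambda>t. t ^ Suc K)" .
  moreover have "(\<lambda>t. (f t - poly p t) + poly (p - p') t) = (\<lambda>t. f t - poly p' t)"
    by (rule ext) (simp add: poly_diff)
  ultimately show "(\<lambda>t. f t - poly p' t) \<in> O[at_right 0](\<lambda>t. t ^ Suc K)" by simp
qed

lemma asxI_tp:
  assumes "\<And>K. (\<lambda>t. f t - poly (tp F K) t) \<in> O[at_right 0](\<lambda>t. t ^ Suc K)"
  shows "asx f F"
proof (rule asxI)
  fix K show "\<exists>p. (\<forall>n\<le>K. coeff p n = fps_nth F n) \<and> (\<lambda>t. f t - poly p t) \<in> O[at_right 0](\<lambda>t. t ^ Suc K)"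
    using assms[of K] by (intro exI[of _ "tp F K"]) (auto simp: coeff_tp)
qed

lemma asxD: "asx f F \<Longrightarrow> (\<forall>n\<le>K. coeff p n = fps_nth F n) \<Longrightarrow>
   (\<lambda>t. f t - poly p t) \<in> O[at_right 0](\<lambda>t. t ^ Suc K)"
  unfolding asx_def by blast

lemma asxD_tp: "asx f F \<Longrightarrow> (\<lambda>t. f t - poly (tp F K) t) \<in> O[at_right 0](\<lambda>t. t ^ Suc K)"
  by (erule asxD) (simp add: coeff_tp)

lemma asx_cong_fps: "asx f F \<Longrightarrow> (\<And>n. fps_nth F n = fps_nth G n) \<Longrightarrow> asx f G"
  unfolding asx_def by simp

lemma asx_cong: assumes "asx f F" "eventually (\<lambda>t. f t = g t) (at_right 0)" shows "asx g F"
  unfolding asx_def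
proof (intro allI impI)
  fix K p assume p: "\<forall>n\<le>K. coeff p n = fps_nth F n"
  have ev: "eventually (\<lambda>t. f t - poly p t = g t - poly p t) (at_right 0)"
    using assms(2) by eventually_elim simp
  have "(\<lambda>t. f t - poly p t) \<in> O[at_right 0](\<lambda>t. t ^ Suc K)" by (rule asxD[OF assms(1) p])
  thus "(\<lambda>t. g t - poly p t) \<in> O[at_right 0](\<lambda>t. t ^ Suc K)"
    by (subst (asm) landau_o.big.in_cong[OF ev])
qed

lemma asx_poly: "asx (\<lambda>t. poly q t) (fps_of_poly q)"
proof (rule asxI)
  fix K show "\<exists>p. (\<forall>n\<le>K. coeff p n = fps_nth (fps_of_poly q) n) \<and> (\<lambda>t. poly q t - poly p t) \<in> O[at_right 0](\<lambda>t. t ^ Suc K)"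
    by (rule exI[of _ q]) simp
qed
lemma asx_const: "asx (\<lambda>_. c) (fps_const c)"
  using asx_poly[of "[:c:]"] by (simp add: fps_of_poly_pCons)

lemma asx_X: "asx (\<lambda>t. t) fps_X"
  using asx_poly[of "[:0,1:]"] by (simp add: fps_of_poly_pCons)

lemma asx_add: assumes "asx f F" "asx g G" shows "asx (\<lambda>t. f t + g t) (F + G)"
proof (rule asxI)
  fix K
  have "(\<lambda>t. (f t - poly (tp F K) t) + (g t - poly (tp G K) t)) \<in> O[at_right 0](\<lambda>t. t ^ Suc K)"
    by (intro sum_in_bigo asxD_tp assms)
  thus "\<exists>p. (\<forall>n\<le>K. coeff p n = fps_nth (F + G) n) \<and> (\<lambda>t. f t + g t - poly p t) \<in> O[at_right 0](\<lambda>t. t ^ Suc K)"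
    by (intro exI[of _ "tp F K + tp G K"]) (auto simp: coeff_tp algebra_simps)
qed

lemma asx_uminus: assumes "asx f F" shows "asx (\<lambda>t. - f t) (- F)"
proof (rule asxI)
  fix K
  have "(\<lambda>t. - f t - poly (- tp F K) t) \<in> O[at_right 0](\<lambda>t. t ^ Suc K)"
    using asxD_tp[OF assms, of K] by (subst landau_o.big.uminus_in_iff[symmetric]) simp
  thus "\<exists>p. (\<forall>n\<le>K. coeff p n = fps_nth (- F) n) \<and> (\<lambda>t. - f t - poly p t) \<in> O[at_right 0](\<lambda>t. t ^ Suc K)"
    by (intro exI[of _ "- tp F K"]) (auto simp: coeff_tp algebra_simps)
qed

lemma asx_diff: "asx f F \<Longrightarrow> asx g G \<Longrightarrow> asx (\<lambda>t. f t - g t) (F - G)"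
  using asx_add[of f F "\<lambda>t. - g t" "-G"] asx_uminus[of g G] by simp

lemma asx_bounded: assumes "asx f F" shows "f \<in> O[at_right 0](\<lambda>_. 1)"
proof -
  have "(\<lambda>t. f t - poly (tp F 0) t) \<in> O[at_right 0](\<lambda>t. t ^ Suc 0)" by (rule asxD_tp[OF assms])
  also have "(\<lambda>t::real. t ^ Suc 0) \<in> O[at_right 0](\<lambda>_. 1)" using t_bigo_1 by simp
  finally have 1: "(\<lambda>t. f t - poly (tp F 0) t) \<in> O[at_right 0](\<lambda>_. 1)" .
  have "(\<lambda>t. (f t - poly (tp F 0) t) + poly (tp F 0) t) \<in> O[at_right 0](\<lambda>_. 1)"
    by (rule sum_in_bigo(1)[OF 1 poly_bigo_1])
  moreover have "(\<lambda>t. (f t - poly (tp F 0) t) + poly (tp F 0) t) = f" by auto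
  ultimately show ?thesis by simp
qed

lemma bigo_tpow_tendsto0:
  assumes "f \<in> O[at_right 0](\<lambda>t::real. t ^ Suc K)"
  shows "(f \<longlongrightarrow> 0) (at_right 0)"
proof -
  have "(\<lambda>t::real. t ^ Suc K) \<in> o[at_right 0](\<lambda>_. 1)"
    by (rule smalloI_tendsto) (auto intro!: tendsto_eq_intros)
  from landau_o.big_small_trans[OF assms this] have "f \<in> o[at_right 0](\<lambda>_. 1)" .
  from smalloD_tendsto[OF this] show ?thesis by simp
qed

lemma asx_tendsto: assumes "asx f F" shows "(f \<longlongrightarrow> fps_nth F 0) (at_right 0)"
proof -
  have "(\<lambda>t. f t - poly (tp F 0) t) \<in> O[at_right 0](\<lambda>t. t ^ Suc 0)" by (rule asxD_tp[OF assms])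
  from bigo_tpow_tendsto0[OF this] have "((\<lambda>t. f t - fps_nth F 0) \<longlongrightarrow> 0) (at_right 0)"
    by (simp add: poly_tp)
  thus ?thesis by (simp add: LIM_zero_iff)
qed

lemma asx_mult: assumes "asx f F" "asx g G" shows "asx (\<lambda>t. f t * g t) (F * G)"
proof (rule asxI)
  fix K
  let ?P = "poly (tp F K)" and ?Q = "poly (tp G K)"
  have "(\<lambda>t. (f t - ?P t) * g t + (g t - ?Q t) * ?P t) \<in> O[at_right 0](\<lambda>t. t ^ Suc K)"
    by (intro sum_in_bigo landau_o.big_1_mult[OF asxD_tp[OF assms(1)] asx_bounded[OF assms(2)]]
         landau_o.big_1_mult'[OF poly_bigo_1 asxD_tp[OF assms(2)]])
  moreover have "\<forall>n\<le>K. coeff (tp F K * tp G K) n = fps_nth (F * G) n"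
    by (auto simp: coeff_mult fps_mult_nth coeff_tp atLeast0AtMost intro!: sum.cong)
  moreover have "(\<lambda>t. f t * g t - poly (tp F K * tp G K) t) = (\<lambda>t. (f t - ?P t) * g t + (g t - ?Q t) * ?P t)"
    by (rule ext) (simp add: algebra_simps)
  ultimately show "\<exists>p. (\<forall>n\<le>K. coeff p n = fps_nth (F * G) n) \<and> (\<lambda>t. f t * g t - poly p t) \<in> O[at_right 0](\<lambda>t. t ^ Suc K)"
    by (intro exI[of _ "tp F K * tp G K"]) simp
qed

lemma asx_cmult: "asx f F \<Longrightarrow> asx (\<lambda>t. c * f t) (fps_const c * F)"
  by (rule asx_mult[OF asx_const])

lemma asx_power: "asx f F \<Longrightarrow> asx (\<lambda>t. f t ^ n) (F ^ n)"
  by (induction n) (auto intro: asx_mult simp: asx_const[of 1, simplified])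

lemma asx_sum: "(\<And>i. i \<in> A \<Longrightarrow> asx (f i) (F i)) \<Longrightarrow> asx (\<lambda>t. \<Sum>i\<in>A. f i t) (\<Sum>i\<in>A. F i)"
proof (induction A rule: infinite_finite_induct)
  case (infinite A) thus ?case using asx_const[of 0] by simp
next
  case empty thus ?case using asx_const[of 0] by simp
next
  case (insert x A) thus ?case by (auto intro: asx_add)
qed

lemma asx_inverse: assumes "asx f F" "fps_nth F 0 \<noteq> 0" shows "asx (\<lambda>t. inverse (f t)) (inverse F)"
proof (rule asxI_tp)
  fix K
  let ?Q = "tp (inverse F) K"
  have lim: "(f \<longlongrightarrow> fps_nth F 0) (at_right 0)" by (rule asx_tendsto[OF assms(1)])
  have ev: "eventually (\<lambda>t. f t \<noteq> 0) (at_right 0)" using lim assms(2) by (rule tendsto_imp_eventually_ne)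
  have inv_b: "(\<lambda>t. inverse (f t)) \<in> O[at_right 0](\<lambda>_. 1)"
    by (rule tendsto_bigo_1) (rule tendsto_inverse[OF lim assms(2)])
  have A: "asx (\<lambda>t. f t * poly ?Q t) (F * fps_of_poly ?Q)" by (intro asx_mult assms asx_poly)
  have coeffs: "\<forall>n\<le>K. coeff 1 n = fps_nth (F * fps_of_poly ?Q) n"
  proof (intro allI impI)
    fix n assume n: "n \<le> K"
    have "fps_nth (F * fps_of_poly ?Q) n = fps_nth (F * inverse F) n"
      using n by (auto simp: fps_mult_nth coeff_tp intro!: sum.cong)
    also have "F * inverse F = 1" using assms(2) by (rule inverse_mult_eq_1')
    finally show "coeff 1 n = fps_nth (F * fps_of_poly ?Q) n" by (simp add: coeff_1)
  qed
  have B: "(\<lambda>t. f t * poly ?Q t - poly 1 t) \<in> O[at_right 0](\<lambda>t. t ^ Suc K)"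
    by (rule asxD[OF A coeffs])
  have C: "(\<lambda>t. - ((f t * poly ?Q t - poly 1 t) * inverse (f t))) \<in> O[at_right 0](\<lambda>t. t ^ Suc K)"
    using landau_o.big_1_mult[OF B inv_b] by simp
  have ev2: "eventually (\<lambda>t. - ((f t * poly ?Q t - poly 1 t) * inverse (f t)) = inverse (f t) - poly ?Q t) (at_right 0)"
    using ev by eventually_elim (simp add: field_simps)
  show "(\<lambda>t. inverse (f t) - poly ?Q t) \<in> O[at_right 0](\<lambda>t. t ^ Suc K)"
    using C by (subst (asm) landau_o.big.in_cong[OF ev2])
qed

lemma asx_div_X: assumes "asx f F" "fps_nth F 0 = 0" shows "asx (\<lambda>t. f t / t) (fps_shift 1 F)"
proof (rule asxI_tp)
  fix K
  let ?q = "tp (fps_shift 1 F) K"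
  have "\<forall>n\<le>Suc K. coeff (pCons 0 ?q) n = fps_nth F n"
    using assms(2) by (auto simp: coeff_pCons coeff_tp split: nat.splits)
  from asxD[OF assms(1) this]
  have 1: "(\<lambda>t. f t - poly (pCons 0 ?q) t) \<in> O[at_right 0](\<lambda>t. t ^ Suc (Suc K))" .
  have 2: "(\<lambda>t. inverse t * (f t - poly (pCons 0 ?q) t)) \<in> O[at_right 0](\<lambda>t. inverse t * t ^ Suc (Suc K))"
    by (rule landau_o.big.mult_left[OF 1])
  have ev1: "eventually (\<lambda>t::real. inverse t * t ^ Suc (Suc K) = t ^ Suc K) (at_right 0)"
    using eventually_at_right_less[of 0] by eventually_elim simp
  have ev2: "eventually (\<lambda>t. inverse t * (f t - poly (pCons 0 ?q) t) = f t / t - poly ?q t) (at_right 0)"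
    using eventually_at_right_less[of 0] by eventually_elim (simp add: field_simps)
  show "(\<lambda>t. f t / t - poly ?q t) \<in> O[at_right 0](\<lambda>t. t ^ Suc K)"
    using 2 by (simp only: landau_o.big.in_cong[OF ev2] landau_o.big.cong[OF ev1])
qed

lemma asx_compose:
  assumes g: "asx g G" and y: "asx y Y" "fps_nth Y 0 = 0"
    and lim: "filterlim y (at_right 0) (at_right 0)"
  shows "asx (\<lambda>t. g (y t)) (G oo Y)"
proof (rule asxI_tp)
  fix K
  define H where "H = (\<Sum>r\<le>K. fps_const (fps_nth G r) * Y ^ r)"
  have "asx (\<lambda>t. \<Sum>r\<le>K. fps_nth G r * y t ^ r) H" unfolding H_def
    by (intro asx_sum asx_cmult asx_power y)
  hence A: "asx (\<lambda>t. poly (tp G K) (y t)) H" by (simp add: poly_tp)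
  have coeffs: "\<forall>n\<le>K. coeff (tp (G oo Y) K) n = fps_nth H n"
  proof (intro allI impI)
    fix n assume n: "n \<le> K"
    have "fps_nth H n = (\<Sum>r\<le>K. fps_nth G r * fps_nth (Y^r) n)" by (simp add: H_def fps_sum_nth)
    also have "\<dots> = (\<Sum>r\<le>n. fps_nth G r * fps_nth (Y^r) n)"
    proof (rule sum.mono_neutral_right)
      show "\<forall>i\<in>{..K} - {..n}. fps_nth G i * fps_nth (Y ^ i) n = 0"
        using startsby_zero_power_prefix[OF y(2)] by auto
    qed (use n in auto)
    also have "\<dots> = fps_nth (G oo Y) n" by (simp add: fps_compose_nth atLeast0AtMost)
    finally show "coeff (tp (G oo Y) K) n = fps_nth H n" using n by (simp add: coeff_tp)
  qed
  have 2: "(\<lambda>t. poly (tp G K) (y t) - poly (tp (G oo Y) K) t) \<in> O[at_right 0](\<lambda>t. t ^ Suc K)"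
    by (rule asxD[OF A coeffs])
  have 1: "(\<lambda>t. g (y t) - poly (tp G K) (y t)) \<in> O[at_right 0](\<lambda>t. y t ^ Suc K)"
    by (rule landau_o.big.compose[OF asxD_tp[OF g] lim])
  have "(\<lambda>t. y t - poly (tp Y 0) t) \<in> O[at_right 0](\<lambda>t. t ^ Suc 0)" by (rule asxD_tp[OF y(1)])
  hence "y \<in> O[at_right 0](\<lambda>t. t)" using y(2) by (simp add: poly_tp)
  hence "(\<lambda>t. y t ^ Suc K) \<in> O[at_right 0](\<lambda>t. t ^ Suc K)" by (rule landau_o.big_power)
  from landau_o.big.trans[OF 1 this] have h1b: "(\<lambda>t. g (y t) - poly (tp G K) (y t)) \<in> O[at_right 0](\<lambda>t. t ^ Suc K)" .
  have "(\<lambda>t. (g (y t) - poly (tp G K) (y t)) + (poly (tp G K) (y t) - poly (tp (G oo Y) K) t)) \<in> O[at_right 0](\<lambda>t. t ^ Suc K)"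
    by (rule sum_in_bigo(1)[OF h1b 2])
  thus "(\<lambda>t. g (y t) - poly (tp (G oo Y) K) t) \<in> O[at_right 0](\<lambda>t. t ^ Suc K)" by simp
qed

definition ysh :: "real \<Rightarrow> real" where "ysh t = t / (1 + t)"
definition Ysh :: "real fps" where "Ysh = fps_X * inverse (1 + fps_X)"

lemma asx_ysh: "asx ysh Ysh"
proof -
  have "asx (\<lambda>t. t * inverse (1 + t)) (fps_X * inverse (fps_const 1 + fps_X))"
    by (intro asx_mult asx_X asx_inverse asx_add asx_const) simp
  thus ?thesis unfolding ysh_def Ysh_def by (simp add: field_simps)
qed

lemma Ysh_0 [simp]: "fps_nth Ysh 0 = 0" by (simp add: Ysh_def)

lemma filterlim_ysh: "filterlim ysh (at_right 0) (at_right 0)"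
proof -
  have "(ysh \<longlongrightarrow> 0) (at_right 0)" unfolding ysh_def by (auto intro!: tendsto_eq_intros)
  moreover have "eventually (\<lambda>t. ysh t \<in> {0<..}) (at_right (0::real))"
    using eventually_at_right_less[of 0] by eventually_elim (simp add: ysh_def)
  ultimately show ?thesis by (auto simp: filterlim_at elim: eventually_mono)
qed


lemma sum_inv_sq_bound:
  fixes a :: real assumes "a > 1"
  shows "(\<Sum>k<n. 1 / (a + real k)^2) \<le> 1/(a-1) - 1/(a + real n - 1)"
proof (induction n)
  case 0 show ?case by simp
next
  case (Suc n)
  have pos: "a + real n - 1 > 0" "a + real n > 0" using assms by auto
  have e: "1/(a + real n - 1) - 1/(a + real n) = 1/((a + real n - 1)*(a + real n))"
    using pos by (simp add: field_simps)
  have "(a + real n - 1)*(a + real n) \<le> (a + real n)^2" using pos by (simp add: power2_eq_square)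
  hence "1/(a + real n)^2 \<le> 1/((a + real n - 1)*(a + real n))"
    by (rule divide_left_mono) (use pos in auto)
  hence "1/(a + real n)^2 \<le> 1/(a + real n - 1) - 1/(a + real n)" by (simp only: e)
  then show ?case using Suc by (simp add: algebra_simps)
qed

lemma telescope_bigo:
  fixes h :: "real \<Rightarrow> real"
  assumes lim: "(h \<longlongrightarrow> 0) (at_right 0)"
    and d: "(\<lambda>t. h (ysh t) - h t) \<in> O[at_right 0](\<lambda>t. t ^ Suc (Suc K))"
  shows "h \<in> O[at_right 0](\<lambda>t. t ^ Suc K)"
proof -
  obtain C where C: "C > 0" "eventually (\<lambda>t. norm (h (ysh t) - h t) \<le> C * norm (t ^ Suc (Suc K))) (at_right 0)"
    using landau_o.bigE[OF d] by blast
  then obtain \<delta> where \<delta>: "\<delta> > 0" "\<And>t. 0 < t \<Longrightarrow> t < \<delta> \<Longrightarrow> norm (h (ysh t) - h t) \<le> C * norm (t ^ Suc (Suc K))"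
    by (auto simp: eventually_at_right_field)
  have main: "\<bar>h t\<bar> \<le> (2*C) * \<bar>t ^ Suc K\<bar>" if t: "0 < t" "t < \<delta>" "t \<le> 1/2" for t
  proof -
    define a where "a = inverse t"
    have a: "a \<ge> 2" using t by (simp add: a_def field_simps)
    define u where "u k = inverse (a + real k)" for k
    have u0: "u 0 = t" by (simp add: u_def a_def)
    have upos: "0 < u k" for k using a by (simp add: u_def)
    have ule: "u k \<le> t" for k
    proof -
      have "inverse (a + real k) \<le> inverse a" by (rule le_imp_inverse_le) (use a in auto)
      thus ?thesis using t by (simp add: u_def a_def)
    qed
    have ush: "ysh (u k) = u (Suc k)" for k using a
      by (simp add: u_def ysh_def field_simps)
    have step: "\<bar>h (u n) - h t\<bar> \<le> C * t ^ K * (\<Sum>k<n. 1 / (a + real k)^2)" for n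
    proof (induction n)
      case 0 thus ?case by (simp add: u0)
    next
      case (Suc n)
      have "\<bar>h (u (Suc n)) - h (u n)\<bar> \<le> C * u n ^ Suc (Suc K)"
        using \<delta>(2)[of "u n"] upos[of n] ule[of n] t by (simp add: ush abs_mult)
      also have "u n ^ Suc (Suc K) = u n ^ K * u n ^ 2" by (simp add: power_add[symmetric])
      also have "\<dots> \<le> t ^ K * (1 / (a + real n)^2)"
        using upos[of n] ule[of n] t by (intro mult_mono power_mono) (auto simp: u_def field_simps)
      finally have 1: "\<bar>h (u (Suc n)) - h (u n)\<bar> \<le> C * (t ^ K * (1 / (a + real n)^2))"
        using C(1) by (simp add: mult_left_mono)
      have "\<bar>h (u (Suc n)) - h t\<bar> \<le> \<bar>h (u (Suc n)) - h (u n)\<bar> + \<bar>h (u n) - h t\<bar>" by simp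
      also have "\<dots> \<le> C * (t ^ K * (1 / (a + real n)^2)) + C * t ^ K * (\<Sum>k<n. 1 / (a + real k)^2)"
        using 1 Suc by simp
      finally show ?case by (simp add: algebra_simps)
    qed
    have sb: "(\<Sum>k<n. 1 / (a + real k)^2) \<le> 2 * t" for n
    proof -
      have "(\<Sum>k<n. 1 / (a + real k)^2) \<le> 1/(a-1) - 1/(a + real n - 1)"
        using a by (intro sum_inv_sq_bound) auto
      also have "\<dots> \<le> 1/(a-1)" using a by simp
      also have "\<dots> \<le> 2 * t" using t a by (simp add: a_def field_simps)
      finally show ?thesis .
    qed
    have bnd: "\<bar>h t\<bar> \<le> 2 * C * t ^ Suc K + \<bar>h (u n)\<bar>" for n
    proof -
      have "C * t ^ K * (\<Sum>k<n. 1 / (a + real k)^2) \<le> C * t ^ K * (2 * t)"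
        using sb[of n] C(1) t by (intro mult_left_mono) auto
      with step[of n] have "\<bar>h (u n) - h t\<bar> \<le> 2 * C * t ^ Suc K" by (simp add: algebra_simps)
      thus ?thesis by linarith
    qed
    have ulim: "filterlim u (at_right 0) sequentially"
    proof -
      have "filterlim (\<lambda>k. a + real k) at_top sequentially"
        by (rule filterlim_tendsto_add_at_top[OF tendsto_const filterlim_real_sequentially])
      hence "(u \<longlongrightarrow> 0) sequentially" unfolding u_def by (rule tendsto_inverse_0_at_top)
      
      moreover have "\<forall>k. u k \<in> {0<..} \<and> u k \<noteq> 0" using upos by (simp add: less_imp_neq[symmetric] less_imp_neq)
      ultimately show ?thesis by (auto simp: filterlim_at intro!: always_eventually)
    qed
    have "((\<lambda>n. 2 * C * t ^ Suc K + \<bar>h (u n)\<bar>) \<longlongrightarrow> 2 * C * t ^ Suc K + \<bar>0\<bar>) sequentially"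
      by (intro tendsto_intros filterlim_compose[OF lim ulim])
    hence "\<bar>h t\<bar> \<le> 2 * C * t ^ Suc K + \<bar>0\<bar>"
      by (rule LIMSEQ_le_const) (use bnd in auto)
    thus ?thesis using t by (simp add: abs_mult)
  qed
  show ?thesis
  proof (rule bigoI[of _ "2*C"])
    have "eventually (\<lambda>t::real. 0 < t \<and> t < \<delta> \<and> t \<le> 1/2) (at_right 0)"
      using \<delta>(1) by (auto simp: eventually_at_right_field intro!: exI[of _ "min \<delta> (1/2)"])
    thus "eventually (\<lambda>t. norm (h t) \<le> 2 * C * norm (t ^ Suc K)) (at_right 0)"
      by eventually_elim (use main in auto)
  qed
qed

lemma integrate_bigo:
  fixes k :: "real \<Rightarrow> real"
  assumes der: "\<And>t. 0 < t \<Longrightarrow> t < \<delta> \<Longrightarrow> (k has_real_derivative k' t) (at t)" and "\<delta> > 0"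
    and lim: "(k \<longlongrightarrow> 0) (at_right 0)" and d: "k' \<in> O[at_right 0](\<lambda>t. t ^ K)"
  shows "k \<in> O[at_right 0](\<lambda>t. t ^ Suc K)"
proof -
  obtain C where C: "C > 0" "eventually (\<lambda>t. norm (k' t) \<le> C * norm (t ^ K)) (at_right 0)"
    using landau_o.bigE[OF d] by blast
  then obtain \<epsilon> where \<epsilon>: "\<epsilon> > 0" "\<And>t. 0 < t \<Longrightarrow> t < \<epsilon> \<Longrightarrow> norm (k' t) \<le> C * norm (t ^ K)"
    by (auto simp: eventually_at_right_field)
  have main: "\<bar>k t\<bar> \<le> C * \<bar>t ^ Suc K\<bar>" if t: "0 < t" "t < \<epsilon>" "t < \<delta>" for t
  proof -
    have bnd: "\<bar>k t - k s\<bar> \<le> C * t ^ Suc K" if s: "0 < s" "s < t" for s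
    proof -
      obtain z where z: "s < z" "z < t" "k t - k s = (t - s) * k' z"
        using MVT2[OF s(2), of k k'] der t s by force
      have "\<bar>k' z\<bar> \<le> C * z ^ K" using \<epsilon>(2)[of z] z s t by (simp add: abs_mult)
      also have "\<dots> \<le> C * t ^ K" using z s C(1) by (intro mult_left_mono power_mono) auto
      finally have "\<bar>k t - k s\<bar> \<le> (t - s) * (C * t ^ K)"
        using z s by (simp add: abs_mult mult_left_mono)
      also have "\<dots> \<le> t * (C * t ^ K)" using s C(1) t by (intro mult_right_mono) auto
      finally show ?thesis by (simp add: algebra_simps)
    qed
    have ev: "eventually (\<lambda>s. \<bar>k t - k s\<bar> \<le> C * t ^ Suc K) (at_right 0)"
      using t bnd by (auto simp: eventually_at_right_field intro!: exI[of _ t])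
    have "((\<lambda>s. \<bar>k t - k s\<bar>) \<longlongrightarrow> \<bar>k t - 0\<bar>) (at_right 0)"
      by (intro tendsto_intros lim)
    hence "\<bar>k t - 0\<bar> \<le> C * t ^ Suc K"
      by (rule tendsto_upperbound) (use ev in auto)
    thus ?thesis using t by (simp add: abs_mult)
  qed
  show ?thesis
  proof (rule bigoI[of _ C])
    have "eventually (\<lambda>t::real. 0 < t \<and> t < \<epsilon> \<and> t < \<delta>) (at_right 0)"
      using \<epsilon>(1) assms(2) by (auto simp: eventually_at_right_field intro!: exI[of _ "min \<epsilon> \<delta>"])
    thus "eventually (\<lambda>t. norm (k t) \<le> C * norm (t ^ Suc K)) (at_right 0)"
      by eventually_elim (use main in auto)
  qed
qed


lemma asx_integrate:
  assumes der: "\<And>t. 0 < t \<Longrightarrow> t < \<delta> \<Longrightarrow> (k has_real_derivative k' t) (at t)" and "\<delta> > 0"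
    and lim: "(k \<longlongrightarrow> c) (at_right 0)" and a: "asx k' F"
  shows "asx k (fps_integral F c)"
proof (rule asxI)
  fix K
  let ?p = "tp (fps_integral F c) (Suc K)"
  have pd: "pderiv ?p = tp F K"
    by (rule poly_eqI) (simp add: coeff_pderiv coeff_tp del: of_nat_Suc)
  define \<phi> where "\<phi> t = k t - poly ?p t" for t
  have d\<phi>: "(\<phi> has_real_derivative (k' t - poly (tp F K) t)) (at t)" if "0 < t" "t < \<delta>" for t
    unfolding \<phi>_def pd[symmetric] by (intro DERIV_diff der that poly_DERIV)
  have "poly ?p 0 = c" by (simp add: poly_0_coeff_0 coeff_tp)
  hence lim\<phi>: "(\<phi> \<longlongrightarrow> 0) (at_right 0)" unfolding \<phi>_def
    using tendsto_diff[OF lim tendsto_poly[OF tendsto_ident_at, of ?p 0 "{0<..}"]] by simp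
  have "(\<lambda>t. k' t - poly (tp F K) t) \<in> O[at_right 0](\<lambda>t. t ^ Suc K)" by (rule asxD_tp[OF a])
  also have "(\<lambda>t::real. t ^ Suc K) \<in> O[at_right 0](\<lambda>t. t ^ K)" by (rule tpow_mono_bigo) simp
  finally have "\<phi> \<in> O[at_right 0](\<lambda>t. t ^ Suc K)"
    by (intro integrate_bigo[OF d\<phi> assms(2) lim\<phi>])
  thus "\<exists>p. (\<forall>n\<le>K. coeff p n = fps_nth (fps_integral F c) n) \<and> (\<lambda>t. k t - poly p t) \<in> O[at_right 0](\<lambda>t. t ^ Suc K)"
    by (intro exI[of _ ?p]) (auto simp: coeff_tp \<phi>_def[abs_def])
qed

definition Bor :: "real fps \<Rightarrow> real fps" where
  "Bor g = Abs_fps (\<lambda>n. if n = 0 then 0 else fact (n - 1) * fps_nth g (n - 1))"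

lemma Bor_nth_0 [simp]: "fps_nth (Bor g) 0 = 0" by (simp add: Bor_def)
lemma Bor_nth_Suc [simp]: "fps_nth (Bor g) (Suc n) = fact n * fps_nth g n" by (simp add: Bor_def)

lemma Bor_add: "Bor (f + g) = Bor f + Bor g"
  by (rule fps_ext) (simp add: Bor_def algebra_simps)
lemma Bor_diff: "Bor (f - g) = Bor f - Bor g"
  by (rule fps_ext) (simp add: Bor_def algebra_simps)
lemma Bor_cmult: "Bor (fps_const c * f) = fps_const c * Bor f"
  by (rule fps_ext) (simp add: Bor_def algebra_simps)
lemma Bor_0 [simp]: "Bor 0 = 0"
  by (rule fps_ext) (simp add: Bor_def)

lemma Ysh_power_nth:
  "fps_nth (Ysh ^ Suc j) (Suc m) = (if j \<le> m then (-1) ^ (m - j) * real (m choose j) else 0)"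
proof -
  have "Ysh ^ Suc j = fps_X ^ Suc j * inverse (1+fps_X) ^ Suc j"
    by (simp only: Ysh_def power_mult_distrib)
  also have "inverse (1+fps_X) ^ Suc j = fps_binomial (- of_nat (Suc j))"
    by (simp only: fps_inverse_power[symmetric] fps_binomial_minus_of_nat)
  finally have "Ysh ^ Suc j = fps_X ^ Suc j * fps_binomial (- of_nat (Suc j))" .
  hence "fps_nth (Ysh ^ Suc j) (Suc m) = fps_nth (fps_X ^ Suc j * fps_binomial (- of_nat (Suc j))) (Suc m)"
    by (simp only:)
  also have "\<dots> = (if m < j then 0 else (- real (Suc j)) gchoose (m - j))"
    by (simp only: fps_X_power_mult_nth fps_binomial_nth) simp
  also have "\<dots> = (if j \<le> m then (-1) ^ (m - j) * real (m choose j) else 0)"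
  proof (cases "j \<le> m")
    case True
    have "(- real (Suc j)) gchoose (m - j) = (-1) ^ (m - j) * ((real (m - j) + real (Suc j) - 1) gchoose (m - j))"
      by (subst gbinomial_negated_upper) simp
    also have "real (m - j) + real (Suc j) - 1 = real m" using True by simp
    also have "real m gchoose (m - j) = real (m choose (m - j))" by (simp add: binomial_gbinomial)
    also have "m choose (m - j) = m choose j" using True by (simp add: binomial_symmetric[symmetric])
    finally show ?thesis using True by simp
  qed simp
  finally show ?thesis .
qed

lemma Bor_shift: "Bor g oo Ysh = Bor (g * fps_exp (-1))"
proof (rule fps_ext)
  fix n
  show "fps_nth (Bor g oo Ysh) n = fps_nth (Bor (g * fps_exp (-1))) n"
  proof (cases n)
    case 0 thus ?thesis by (simp add: fps_compose_nth)
  next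
    case (Suc m)
    have "fps_nth (Bor g oo Ysh) n = (\<Sum>i=0..Suc m. fps_nth (Bor g) i * fps_nth (Ysh ^ i) (Suc m))"
      by (simp add: fps_compose_nth Suc)
    also have "\<dots> = (\<Sum>j=0..m. fps_nth (Bor g) (Suc j) * fps_nth (Ysh ^ Suc j) (Suc m))"
      by (subst sum.atLeast0_atMost_Suc_shift) simp
    also have "\<dots> = (\<Sum>j=0..m. fps_nth g j * (fact m * (-1) ^ (m - j) / fact (m - j)))"
    proof (rule sum.cong[OF refl])
      fix j assume j: "j \<in> {0..m}"
      have "fact j * real (m choose j) = fact m / fact (m - j)"
        using j by (simp add: binomial_fact field_simps)
      thus "fps_nth (Bor g) (Suc j) * fps_nth (Ysh ^ Suc j) (Suc m) = fps_nth g j * (fact m * (-1) ^ (m - j) / fact (m - j))"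
        using j by (simp only: Bor_nth_Suc Ysh_power_nth) (simp add: field_simps)
    qed
    also have "\<dots> = fact m * fps_nth (g * fps_exp (-1)) m"
      by (simp add: fps_mult_nth sum_distrib_left field_simps)
    finally show ?thesis by (simp add: Suc)
  qed
qed

lemma Bor_shift1: "fps_shift 1 (Bor g) = Bor (fps_deriv g) + fps_const (fps_nth g 0)"
proof (rule fps_ext)
  fix n show "fps_nth (fps_shift 1 (Bor g)) n = fps_nth (Bor (fps_deriv g) + fps_const (fps_nth g 0)) n"
    by (cases n) (simp_all add: Bor_def algebra_simps)
qed


definition Dfps :: "real fps" where "Dfps = fps_shift 1 (fps_exp 1 - 1)"
definition b1 :: "real fps" where "b1 = inverse Dfps"

lemma Dfps_0 [simp]: "fps_nth Dfps 0 = 1" by (simp add: Dfps_def)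

lemma X_Dfps: "fps_X * Dfps = fps_exp 1 - 1"
  by (rule fps_ext) (simp add: Dfps_def fps_X_mult_nth)

lemma b1_Dfps: "b1 * Dfps = 1" unfolding b1_def by (rule inverse_mult_eq_1) simp

lemma K1: "b1 * (fps_exp 1 - 1) = fps_X"
  by (simp flip: X_Dfps add: mult.left_commute b1_Dfps)

lemma K2: "b1 - fps_X * fps_deriv b1 = b1^2 * fps_exp 1"
proof -
  have dD: "Dfps + fps_X * fps_deriv Dfps = fps_exp 1"
  proof -
    have "fps_deriv (fps_X * Dfps) = fps_exp 1" by (simp add: X_Dfps)
    thus ?thesis by (simp add: algebra_simps)
  qed
  have db: "fps_deriv b1 = - fps_deriv Dfps * b1^2" unfolding b1_def by (rule fps_inverse_deriv) simp
  have "b1 = b1^2 * Dfps" by (simp add: power2_eq_square mult.assoc b1_Dfps)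
  hence "b1 - fps_X * fps_deriv b1 = b1^2 * Dfps + b1^2 * (fps_X * fps_deriv Dfps)"
    by (simp add: db algebra_simps)
  also have "\<dots> = b1^2 * fps_exp 1" by (simp flip: dD add: algebra_simps)
  finally show ?thesis .
qed

lemma exp_m1_exp: "fps_exp (-1) * fps_exp 1 = (1 :: real fps)"
  by (simp flip: fps_exp_add_mult)

lemma K3:
  assumes "m \<ge> 1"
  shows "fps_exp (-1) * (b1^m - fps_const (1 / real m) * (fps_X * fps_deriv (b1^m))) = b1^(Suc m)"
proof -
  obtain k where m: "m = Suc k" using assms by (cases m) auto
  have dp: "fps_deriv (b1^m) = fps_const (real m) * fps_deriv b1 * b1^k"
    by (simp only: fps_deriv_power m diff_Suc_1)
  have cc: "fps_const (1 / real m) * fps_const (real m) = 1"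
    using assms by (simp add: fps_const_mult[symmetric] del: fps_const_mult)
  have "fps_const (1 / real m) * (fps_X * fps_deriv (b1^m)) =
        (fps_const (1 / real m) * fps_const (real m)) * (b1^k * (fps_X * fps_deriv b1))"
    by (simp only: dp mult_ac)
  also have "\<dots> = b1^k * (fps_X * fps_deriv b1)" by (simp only: cc mult_1_left)
  finally have "fps_const (1 / real m) * (fps_X * fps_deriv (b1^m)) = b1^k * (fps_X * fps_deriv b1)" .
  hence "b1^m - fps_const (1 / real m) * (fps_X * fps_deriv (b1^m)) = b1^k * (b1 - fps_X * fps_deriv b1)"
    by (simp add: m algebra_simps)
  also have "\<dots> = b1^(Suc m) * fps_exp 1" by (simp add: K2 m power2_eq_square algebra_simps)
  finally show ?thesis by (simp add: mult.left_commute[of "fps_exp (-1)"] exp_m1_exp)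
qed

lemma exp_exp_m1: "fps_exp 1 * fps_exp (-1) = (1 :: real fps)"
  by (simp flip: fps_exp_add_mult)

lemma K5: "b1 * (1 - fps_exp (-1)) = fps_X * fps_exp (-1)"
proof -
  have "b1 * (1 - fps_exp (-1)) = fps_exp (-1) * (b1 * (fps_exp 1 - 1))"
    by (simp add: algebra_simps exp_m1_exp exp_exp_m1)
  thus ?thesis by (simp add: K1 mult.commute)
qed


lemma K4:
  assumes "m \<ge> 1"
  shows "fps_exp (-1) * (fps_const (1 / real m) * (fps_deriv ((-fps_X)^(Suc i) * b1^m)
           + fps_const (real (Suc i + m)) * ((-fps_X)^i * b1^m))) = (-fps_X)^i * b1^(Suc m)"
proof -
  define B where "B = b1^m"
  have d: "fps_deriv ((-fps_X)^(Suc i)) = - fps_const (real (Suc i)) * (-fps_X :: real fps)^i"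
    by (simp only: fps_deriv_power diff_Suc_1) simp
  have cc: "fps_const (1 / real m) * fps_const (real m) = 1"
    using assms by (simp add: fps_const_mult[symmetric] del: fps_const_mult)
  have "fps_deriv ((-fps_X)^(Suc i) * B) + fps_const (real (Suc i + m)) * ((-fps_X)^i * B)
      = (-fps_X)^i * (fps_const (real m) * B - fps_X * fps_deriv B)"
  proof -
    have c: "fps_const (real (Suc i + m)) = fps_const (real (Suc i)) + fps_const (real m)"
      by simp
    have p: "(-fps_X :: real fps)^(Suc i) = (-fps_X) * (-fps_X)^i" by (rule power_Suc)
    have dm: "fps_deriv ((-fps_X)^(Suc i) * B) = (-fps_X)^(Suc i) * fps_deriv B + fps_deriv ((-fps_X)^(Suc i)) * B"
      by (rule fps_deriv_mult)
    have gen: "\<And>Y c1 c2 (Xv::real fps) B dB. ((-Xv) * Y) * dB + (- c1 * Y) * B + (c1 + c2) * (Y * B) = Y * (c2 * B - Xv * dB)"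
      by (simp add: algebra_simps)
    show ?thesis unfolding dm unfolding d unfolding c p by (rule gen)
  qed
  hence "fps_const (1 / real m) * (fps_deriv ((-fps_X)^(Suc i) * B) + fps_const (real (Suc i + m)) * ((-fps_X)^i * B))
      = (-fps_X)^i * ((fps_const (1 / real m) * fps_const (real m)) * B - fps_const (1 / real m) * (fps_X * fps_deriv B))"
    by (simp only: ring_distribs mult_ac)
  also have "\<dots> = (-fps_X)^i * (B - fps_const (1 / real m) * (fps_X * fps_deriv B))" by (simp only: cc mult_1_left)
  finally have e: "fps_const (1 / real m) * (fps_deriv ((-fps_X)^(Suc i) * B) + fps_const (real (Suc i + m)) * ((-fps_X)^i * B))
      = (-fps_X)^i * (B - fps_const (1 / real m) * (fps_X * fps_deriv B))" .
  show ?thesis unfolding B_def[symmetric] e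
    using K3[OF assms] by (simp add: B_def mult.left_commute[of "fps_exp (-1)"])
qed

definition smooth0 :: "(real \<Rightarrow> real) \<Rightarrow> bool" where
  "smooth0 f \<longleftrightarrow> (\<forall>n x. x > 0 \<longrightarrow> ((deriv ^^ n) f has_real_derivative (deriv ^^ Suc n) f x) (at x))"

lemma pos_not_nonpos_Int: "(x::real) > 0 \<Longrightarrow> x \<notin> \<int>\<^sub>\<le>\<^sub>0"
  by (auto elim!: nonpos_Ints_cases)

lemma ev_pos_nhds: "(x::real) > 0 \<Longrightarrow> eventually (\<lambda>y. y > 0) (nhds x)"
  by (rule eventually_nhds_in_open[of "{0<..}", simplified]) auto

lemma higher_deriv_Digamma: "x > 0 \<Longrightarrow> (deriv ^^ n) (Polygamma 0) x = Polygamma n (x::real)"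
  using higher_deriv_Polygamma[of x n 0] pos_not_nonpos_Int by simp

lemma smooth0_Digamma: "smooth0 (Polygamma 0)"
  unfolding smooth0_def
proof (intro allI impI)
  fix n and x :: real assume x: "x > 0"
  have ev: "eventually (\<lambda>y. (deriv ^^ n) (Polygamma 0) y = Polygamma n y) (nhds x)"
    using ev_pos_nhds[OF x] by eventually_elim (rule higher_deriv_Digamma)
  have "(Polygamma n has_real_derivative Polygamma (Suc n) x) (at x)"
    by (rule has_field_derivative_Polygamma) (rule pos_not_nonpos_Int[OF x])
  thus "((deriv ^^ n) (Polygamma 0) has_real_derivative (deriv ^^ Suc n) (Polygamma 0) x) (at x)"
    by (subst DERIV_cong_ev[OF refl ev refl]) (simp only: higher_deriv_Digamma[OF x] add_0)
qed

lemma smooth0_lin_formula: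
  assumes g: "smooth0 g"
  shows "x > 0 \<Longrightarrow> (deriv ^^ n) (\<lambda>x. c * ((x - a) * g x)) x =
            c * ((x - a) * (deriv ^^ n) g x + real n * (deriv ^^ (n - 1)) g x)"
proof (induction n arbitrary: x)
  case 0 thus ?case by simp
next
  case (Suc n)
  define \<phi> where "\<phi> y = c * ((y - a) * (deriv ^^ n) g y + real n * (deriv ^^ (n - 1)) g y)" for y
  have ev: "eventually (\<lambda>y. (deriv ^^ n) (\<lambda>x. c * ((x - a) * g x)) y = \<phi> y) (nhds x)"
    using ev_pos_nhds[OF Suc.prems] by eventually_elim (simp add: Suc.IH \<phi>_def)
  have d1: "((deriv ^^ n) g has_real_derivative (deriv ^^ Suc n) g x) (at x)"
    using g Suc.prems unfolding smooth0_def by blast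
  have d2: "((deriv ^^ (n - 1)) g has_real_derivative (deriv ^^ Suc (n - 1)) g x) (at x)"
    using g Suc.prems unfolding smooth0_def by blast
  have e3: "((\<lambda>y. c * ((y - a) * (deriv ^^ n) g y + real n * (deriv ^^ (n - 1)) g y)) has_real_derivative
      c * (((1 - 0) * (deriv ^^ n) g x + (deriv ^^ Suc n) g x * (x - a)) + real n * (deriv ^^ Suc (n - 1)) g x)) (at x)"
    by (intro DERIV_cmult DERIV_add DERIV_mult DERIV_diff DERIV_ident DERIV_const d1 d2)
  have "(\<phi> has_real_derivative c * (1 * (deriv ^^ n) g x + (x - a) * (deriv ^^ Suc n) g x
            + real n * (deriv ^^ Suc (n - 1)) g x)) (at x)"
    unfolding \<phi>_def[abs_def] by (rule DERIV_cong[OF e3]) (simp add: algebra_simps)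
  moreover have nn: "real n * (deriv ^^ Suc (n - 1)) g x = real n * (deriv ^^ n) g x"
    by (cases n) auto
  have "c * (1 * (deriv ^^ n) g x + (x - a) * (deriv ^^ Suc n) g x + real n * (deriv ^^ Suc (n - 1)) g x)
      = c * ((x - a) * (deriv ^^ Suc n) g x + real (Suc n) * (deriv ^^ n) g x)"
    unfolding nn by (simp add: algebra_simps)
  ultimately have "(\<phi> has_real_derivative c * ((x - a) * (deriv ^^ Suc n) g x + real (Suc n) * (deriv ^^ n) g x)) (at x)"
    by (rule DERIV_cong)
  hence "deriv \<phi> x = c * ((x - a) * (deriv ^^ Suc n) g x + real (Suc n) * (deriv ^^ n) g x)"
    by (rule DERIV_imp_deriv)
  moreover have "(deriv ^^ Suc n) (\<lambda>x. c * ((x - a) * g x)) x = deriv \<phi> x"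
    by (simp only: funpow.simps o_apply) (rule deriv_cong_ev[OF ev refl])
  ultimately show ?case by simp
qed

lemma smooth0_lin:
  assumes g: "smooth0 g"
  shows "smooth0 (\<lambda>x. c * ((x - a) * g x))"
  unfolding smooth0_def
proof (intro allI impI)
  fix n and x :: real assume x: "x > 0"
  define \<phi> where "\<phi> y = c * ((y - a) * (deriv ^^ n) g y + real n * (deriv ^^ (n - 1)) g y)" for y
  have ev: "eventually (\<lambda>y. (deriv ^^ n) (\<lambda>x. c * ((x - a) * g x)) y = \<phi> y) (nhds x)"
    using ev_pos_nhds[OF x] by eventually_elim (simp add: smooth0_lin_formula[OF g] \<phi>_def)
  have d1: "((deriv ^^ n) g has_real_derivative (deriv ^^ Suc n) g x) (at x)"
    using g x unfolding smooth0_def by blast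
  have d2: "((deriv ^^ (n - 1)) g has_real_derivative (deriv ^^ Suc (n - 1)) g x) (at x)"
    using g x unfolding smooth0_def by blast
  have e3: "((\<lambda>y. c * ((y - a) * (deriv ^^ n) g y + real n * (deriv ^^ (n - 1)) g y)) has_real_derivative
      c * (((1 - 0) * (deriv ^^ n) g x + (deriv ^^ Suc n) g x * (x - a)) + real n * (deriv ^^ Suc (n - 1)) g x)) (at x)"
    by (intro DERIV_cmult DERIV_add DERIV_mult DERIV_diff DERIV_ident DERIV_const d1 d2)
  have "(\<phi> has_real_derivative c * (1 * (deriv ^^ n) g x + (x - a) * (deriv ^^ Suc n) g x
            + real n * (deriv ^^ Suc (n - 1)) g x)) (at x)"
    unfolding \<phi>_def[abs_def] by (rule DERIV_cong[OF e3]) (simp add: algebra_simps)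
  moreover have nn: "real n * (deriv ^^ Suc (n - 1)) g x = real n * (deriv ^^ n) g x"
    by (cases n) auto
  have "c * (1 * (deriv ^^ n) g x + (x - a) * (deriv ^^ Suc n) g x + real n * (deriv ^^ Suc (n - 1)) g x)
      = c * ((x - a) * (deriv ^^ Suc n) g x + real (Suc n) * (deriv ^^ n) g x)"
    unfolding nn by (simp add: algebra_simps)
  ultimately have "(\<phi> has_real_derivative c * ((x - a) * (deriv ^^ Suc n) g x + real (Suc n) * (deriv ^^ n) g x)) (at x)"
    by (rule DERIV_cong)
  thus "((deriv ^^ n) (\<lambda>x. c * ((x - a) * g x)) has_real_derivative (deriv ^^ Suc n) (\<lambda>x. c * ((x - a) * g x)) x) (at x)"
    by (subst DERIV_cong_ev[OF refl ev refl]) (use smooth0_lin_formula[OF g x, of "Suc n"] in simp)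
qed

definition hfun :: "nat \<Rightarrow> real \<Rightarrow> real" where
  "hfun l x = ((x - 1) gchoose (l - 1)) * Digamma x"

definition Dl :: "nat \<Rightarrow> nat \<Rightarrow> real \<Rightarrow> real" where
  "Dl l n = (deriv ^^ n) (hfun l)"

lemma gchoose_rec: "(a::real) gchoose (Suc k) = (1 / real (Suc k)) * ((a - real k) * (a gchoose k))"
  using gbinomial_mult_1[of a k] by (simp add: field_simps)

lemma hfun_rec: "hfun (Suc (Suc k)) = (\<lambda>x. (1 / real (Suc k)) * ((x - real (Suc k)) * hfun (Suc k) x))"
proof
  fix x :: real
  have "hfun (Suc (Suc k)) x = ((x - 1) gchoose (Suc k)) * Digamma x" by (simp add: hfun_def)
  also have "\<dots> = (1 / real (Suc k)) * ((x - 1 - real k) * ((x - 1) gchoose k)) * Digamma x"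
    by (simp only: gchoose_rec)
  also have "x - 1 - real k = x - real (Suc k)" by simp
  also have "(1 / real (Suc k)) * ((x - real (Suc k)) * ((x - 1) gchoose k)) * Digamma x
     = (1 / real (Suc k)) * ((x - real (Suc k)) * (((x - 1) gchoose k) * Digamma x))"
    by (simp only: mult.assoc)
  finally show "hfun (Suc (Suc k)) x = (1 / real (Suc k)) * ((x - real (Suc k)) * hfun (Suc k) x)"
    by (simp add: hfun_def)
qed

lemma hfun_1: "hfun (Suc 0) = Polygamma 0"
  by (rule ext) (simp add: hfun_def)

lemma smooth0_hfun: "smooth0 (hfun (Suc k))"
proof (induction k)
  case 0 thus ?case by (simp add: hfun_1 smooth0_Digamma)
next
  case (Suc k) thus ?case by (simp only: hfun_rec) (rule smooth0_lin)
qed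

lemma Dl_1: "x > 0 \<Longrightarrow> Dl (Suc 0) n x = Polygamma n x"
  by (simp add: Dl_def hfun_1 higher_deriv_Digamma)

lemma Dl_deriv: "x > 0 \<Longrightarrow> (Dl (Suc k) n has_real_derivative Dl (Suc k) (Suc n) x) (at x)"
  using smooth0_hfun[of k] unfolding smooth0_def Dl_def by blast

lemma Dl_rec: "x > 0 \<Longrightarrow> Dl (Suc (Suc k)) n x =
   (1 / real (Suc k)) * ((x - real (Suc k)) * Dl (Suc k) n x + real n * Dl (Suc k) (n - 1) x)"
  unfolding Dl_def hfun_rec by (rule smooth0_lin_formula[OF smooth0_hfun])

lemma Polygamma_bound:
  fixes w :: real assumes w: "w > 1" and j: "j \<ge> 1"
  shows "\<bar>Polygamma j w\<bar> \<le> fact j / (w - 1)"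
proof -
  have w0: "w \<noteq> 0" using w by simp
  have summ: "summable (\<lambda>k. inverse ((w + real k) ^ Suc j))"
    using Polygamma_converges'[OF w0, of "Suc j"] j by simp
  have "(\<Sum>k. inverse ((w + real k) ^ Suc j)) \<le> 1 / (w - 1)"
  proof (rule suminf_le_const[OF summ])
    fix n
    have "(\<Sum>k<n. inverse ((w + real k) ^ Suc j)) \<le> (\<Sum>k<n. 1 / (w + real k)^2)"
    proof (rule sum_mono)
      fix k assume "k \<in> {..<n}"
      have "(w + real k)^2 \<le> (w + real k) ^ Suc j"
        using w j by (intro power_increasing) auto
      thus "inverse ((w + real k) ^ Suc j) \<le> 1 / (w + real k)^2"
        using w by (simp add: inverse_eq_divide divide_left_mono)
    qed
    also have "\<dots> \<le> 1/(w-1) - 1/(w + real n - 1)" using w by (rule sum_inv_sq_bound)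
    also have "\<dots> \<le> 1/(w-1)" using w by simp
    finally show "(\<Sum>k<n. inverse ((w + real k) ^ Suc j)) \<le> 1 / (w - 1)" .
  qed
  moreover have "(\<Sum>k. inverse ((w + real k) ^ Suc j)) \<ge> 0"
    using w by (intro suminf_nonneg summ) auto
  moreover have "Polygamma j w = (-1) ^ Suc j * fact j * (\<Sum>k. inverse ((w + real k) ^ Suc j))"
    using j by (simp add: Polygamma_def)
  ultimately have S: "\<bar>(\<Sum>k. inverse ((w + real k) ^ Suc j))\<bar> \<le> 1 / (w - 1)"
    and P: "Polygamma j w = (-1) ^ Suc j * fact j * (\<Sum>k. inverse ((w + real k) ^ Suc j))" by auto
  have "\<bar>Polygamma j w\<bar> = fact j * \<bar>(\<Sum>k. inverse ((w + real k) ^ Suc j))\<bar>"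
    unfolding P by (simp add: abs_mult)
  also have "\<dots> \<le> fact j * (1 / (w - 1))" by (rule mult_left_mono[OF S]) simp
  finally show ?thesis by simp
qed

lemma Polygamma_tendsto0:
  assumes j: "j \<ge> 1"
  shows "((\<lambda>t. Polygamma j (1/t + 1 :: real)) \<longlongrightarrow> 0) (at_right 0)"
proof (rule tendsto_sandwich[of "\<lambda>t. - (fact j * t)" _ _ "\<lambda>t. fact j * t"])
  have "eventually (\<lambda>t::real. t > 0) (at_right 0)" by (rule eventually_at_right_less)
  hence "eventually (\<lambda>t::real. \<bar>Polygamma j (1/t + 1)\<bar> \<le> fact j * t) (at_right 0)"
    by eventually_elim (use Polygamma_bound[OF _ j, of "1/t + 1" for t] in auto)
  thus "eventually (\<lambda>t::real. - (fact j * t) \<le> Polygamma j (1/t + 1)) (at_right 0)"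
       "eventually (\<lambda>t::real. Polygamma j (1/t + 1) \<le> fact j * t) (at_right 0)"
    by (auto elim!: eventually_mono)
qed (auto intro!: tendsto_eq_intros)

lemma Digamma_ln_tendsto:
  "((\<lambda>t. Digamma (1/t + 1 :: real) + ln t) \<longlongrightarrow> 0) (at_right 0)"
proof -
  define N where "N t = nat \<lfloor>inverse t\<rfloor>" for t :: real
  define low where "low n = (harm (Suc n) - ln (real (Suc n))) - euler_mascheroni - inverse (real (Suc n))" for n
  define upp where "upp n = (harm n - ln (real n)) - euler_mascheroni + inverse (real (Suc n))" for n
  have Nlim: "filterlim N sequentially (at_right 0)"
    unfolding N_def
    by (rule filterlim_compose[OF filterlim_nat_sequentially
            filterlim_compose[OF filterlim_floor_sequentially filterlim_inverse_at_top_right]])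
  have inv0: "(\<lambda>n. inverse (real (Suc n))) \<longlonglongrightarrow> 0"
    by (rule LIMSEQ_inverse_real_of_nat)
  have em1: "(\<lambda>n. harm (Suc n) - ln (real (Suc n))) \<longlonglongrightarrow> euler_mascheroni"
    by (rule LIMSEQ_Suc[OF euler_mascheroni_LIMSEQ])
  have "low \<longlonglongrightarrow> euler_mascheroni - euler_mascheroni - 0"
    unfolding low_def by (intro tendsto_intros inv0 em1)
  hence lowl: "low \<longlonglongrightarrow> 0" by simp
  have "upp \<longlonglongrightarrow> euler_mascheroni - euler_mascheroni + 0"
    unfolding upp_def by (intro tendsto_intros inv0 euler_mascheroni_LIMSEQ)
  hence uppl: "upp \<longlonglongrightarrow> 0" by simp
  have bnds: "low (N t) \<le> Digamma (1/t + 1) + ln t \<and> Digamma (1/t + 1) + ln t \<le> upp (N t)"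
    if t: "0 < t" "t < 1" for t :: real
  proof -
    define f where "f = \<lfloor>inverse t\<rfloor>"
    define n where "n = N t"
    have it: "inverse t > 1" using t by (simp add: one_less_inverse)
    have f1: "f \<ge> 1" unfolding f_def using it by (simp add: le_floor_iff)
    have nf: "real n = real_of_int f" unfolding n_def N_def f_def[symmetric] using f1 by simp
    have fl: "real n \<le> 1/t" "1/t < real n + 1"
      unfolding nf f_def using of_int_floor_le[of "inverse t"] real_of_int_floor_add_one_gt[of "inverse t"]
      by (auto simp: inverse_eq_divide)
    have n1: "n \<ge> 1" using nf f1 by simp
    have lt: "ln t = - ln (1/t)" using t by (simp add: ln_div)
    have D1: "Digamma (real n + 1) = harm n - euler_mascheroni"
      using Digamma_of_nat[of n] by (simp add: add.commute)
    have D2: "Digamma (real n + 2) = harm n + inverse (real n + 1) - euler_mascheroni"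
      using Digamma_of_nat[of "Suc n"] by (simp add: add.commute harm_Suc add_ac)
    have "Digamma (real n + 1) \<le> Digamma (1/t + 1)" using fl by (intro Digamma_real_mono) auto
    moreover have "Digamma (1/t + 1) \<le> Digamma (real n + 2)" using fl t by (intro Digamma_real_mono) auto
    moreover have "ln (1/t) \<le> ln (real n + 1)" using fl t by (subst ln_le_cancel_iff) auto
    moreover have "ln (real n) \<le> ln (1/t)" using fl t n1 by (subst ln_le_cancel_iff) auto
    moreover have "low n = harm n - ln (real n + 1) - euler_mascheroni"
      by (simp add: low_def harm_Suc add.commute)
    moreover have "upp n = harm n - ln (real n) - euler_mascheroni + inverse (real n + 1)"
      by (simp add: upp_def add.commute)
    ultimately show ?thesis unfolding n_def[symmetric] lt using D1 D2 by linarith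
  qed
  show ?thesis
  proof (rule tendsto_sandwich[of "\<lambda>t. low (N t)" _ _ "\<lambda>t. upp (N t)"])
    have "eventually (\<lambda>t::real. 0 < t \<and> t < 1) (at_right 0)"
      by (auto simp: eventually_at_right_field intro!: exI[of _ 1])
    thus "eventually (\<lambda>t. low (N t) \<le> Digamma (1 / t + 1) + ln t) (at_right 0)"
         "eventually (\<lambda>t. Digamma (1 / t + 1) + ln t \<le> upp (N t)) (at_right 0)"
      using bnds by (auto elim!: eventually_mono)
  qed (auto intro: filterlim_compose[OF lowl Nlim] filterlim_compose[OF uppl Nlim])
qed


lemma negX_power_nth: "fps_nth ((-fps_X :: real fps)^k) m = (if m = k then (-1)^k else 0)"
proof (induction k arbitrary: m)
  case 0 thus ?case by simp
next
  case (Suc k)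
  have "fps_nth ((-fps_X :: real fps)^(Suc k)) m = - fps_nth (fps_X * (-fps_X)^k) m" by simp
  also have "\<dots> = (if m = Suc k then (-1)^(Suc k) else 0)"
    by (cases m) (simp_all only: fps_X_mult_nth Suc.IH, auto)
  finally show ?case .
qed

lemma Bor_negX_power: "Bor ((-fps_X)^(Suc i)) = fps_const ((-1)^(Suc i) * fact (Suc i)) * fps_X^(Suc (Suc i))"
proof (rule fps_ext)
  fix n show "fps_nth (Bor ((-fps_X)^(Suc i))) n = fps_nth (fps_const ((-1)^(Suc i) * fact (Suc i)) * fps_X^(Suc (Suc i))) n"
    by (cases n) (auto simp: negX_power_nth fact_reduce)
qed

lemma Ysh_power_compose: "Ysh ^ n = fps_X ^ n oo Ysh"
  using fps_compose_power[of Ysh fps_X n] by simp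

lemma T1: "fps_const ((-1)^(Suc i) * fact (Suc i)) * Ysh^(Suc (Suc i)) - (Bor ((-fps_X)^i * b1) oo Ysh)
     + Bor ((-fps_X)^i * b1) = 0"
proof -
  have "fps_const ((-1)^(Suc i) * fact (Suc i)) * Ysh^(Suc (Suc i)) = Bor ((-fps_X)^(Suc i)) oo Ysh"
    by (simp only: Ysh_power_compose fps_const_mult_apply_left Bor_negX_power)
  also have "\<dots> = Bor ((-fps_X)^(Suc i) * fps_exp (-1))" by (rule Bor_shift)
  finally have 1: "fps_const ((-1)^(Suc i) * fact (Suc i)) * Ysh^(Suc (Suc i)) = Bor ((-fps_X)^(Suc i) * fps_exp (-1))" .
  have 2: "Bor ((-fps_X)^i * b1) oo Ysh = Bor ((-fps_X)^i * b1 * fps_exp (-1))" by (rule Bor_shift)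
  have "(-fps_X)^(Suc i) * fps_exp (-1) - (-fps_X)^i * b1 * fps_exp (-1) + (-fps_X)^i * b1
      = (-fps_X)^i * (b1 * (1 - fps_exp (-1)) - fps_X * fps_exp (-1))"
    by (simp add: algebra_simps)
  also have "\<dots> = 0" by (simp add: K5)
  finally have 3: "(-fps_X)^(Suc i) * fps_exp (-1) - (-fps_X)^i * b1 * fps_exp (-1) + (-fps_X)^i * b1 = 0" .
  show ?thesis unfolding 1 2 by (simp only: Bor_add[symmetric] Bor_diff[symmetric] 3 Bor_0)
qed

lemma compose_nth_cong:
  assumes "\<And>i. i \<le> n \<Longrightarrow> fps_nth F i = fps_nth G i"
  shows "fps_nth (F oo Y) n = fps_nth (G oo Y) n"
  using assms by (simp add: fps_compose_nth)

lemma Polygamma_shift: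
  assumes t: "t > 0"
  shows "Polygamma j (1 / ysh t + 1) = Polygamma j (1/t + 1) + (-1)^j * fact j * ysh t ^ Suc j"
proof -
  have "1/t + 1 > (0::real)" using t by (intro add_pos_pos) auto
  hence z: "1/t + 1 \<noteq> (0::real)" by simp
  have e: "1 / ysh t + 1 = (1/t + 1) + 1" using t by (simp add: ysh_def field_simps)
  have y: "ysh t = inverse (1/t + 1)" using t by (simp add: ysh_def field_simps)
  show ?thesis unfolding e Polygamma_plus1[OF z] by (simp add: y power_inverse divide_inverse)
qed

lemma asx_Polygamma_base:
  "asx (\<lambda>t. Polygamma (Suc i) (1/t + 1)) (Bor ((-fps_X)^i * b1))"
proof (rule asxI)
  fix K
  define \<Phi> where "\<Phi> = Bor ((-fps_X)^i * b1)"
  define c :: real where "c = (-1)^(Suc i) * fact (Suc i)"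
  define p where "p = tp \<Phi> (Suc K)"
  define \<phi> where "\<phi> t = Polygamma (Suc i) (1/t + 1)" for t :: real
  define h where "h t = \<phi> t - poly p t" for t :: real
  have lim: "(h \<longlongrightarrow> 0) (at_right 0)"
  proof -
    have "(h \<longlongrightarrow> 0 - poly p 0) (at_right 0)" unfolding h_def \<phi>_def
      by (intro tendsto_intros Polygamma_tendsto0) auto
    moreover have "poly p 0 = 0" by (simp add: p_def poly_0_coeff_0 coeff_tp \<Phi>_def)
    ultimately show ?thesis by simp
  qed
  define R where "R = fps_const c * Ysh^(Suc (Suc i)) - (fps_of_poly p oo Ysh) + fps_of_poly p"
  have A: "asx (\<lambda>t. c * ysh t ^ Suc (Suc i) - poly p (ysh t) + poly p t) R"
    unfolding R_def
    by (intro asx_add asx_diff asx_cmult asx_power asx_ysh asx_compose asx_poly filterlim_ysh) simp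
  have coeffs: "\<forall>n\<le>Suc K. coeff 0 n = fps_nth R n"
  proof (intro allI impI)
    fix n assume n: "n \<le> Suc K"
    have "fps_nth (fps_of_poly p oo Ysh) n = fps_nth (\<Phi> oo Ysh) n"
      by (rule compose_nth_cong) (use n in \<open>simp add: p_def coeff_tp\<close>)
    moreover have "fps_nth (fps_of_poly p) n = fps_nth \<Phi> n" using n by (simp add: p_def coeff_tp)
    ultimately have "fps_nth R n = fps_nth (fps_const c * Ysh^(Suc (Suc i)) - (\<Phi> oo Ysh) + \<Phi>) n"
      by (simp add: R_def)
    also have "\<dots> = 0" unfolding c_def \<Phi>_def T1 by simp
    finally show "coeff 0 n = fps_nth R n" by simp
  qed
  have B: "(\<lambda>t. c * ysh t ^ Suc (Suc i) - poly p (ysh t) + poly p t - poly 0 t) \<in> O[at_right 0](\<lambda>t. t ^ Suc (Suc K))"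
    by (rule asxD[OF A coeffs])
  have ev: "eventually (\<lambda>t. c * ysh t ^ Suc (Suc i) - poly p (ysh t) + poly p t - poly 0 t = h (ysh t) - h t) (at_right 0)"
    using eventually_at_right_less[of 0]
    by eventually_elim (simp add: h_def \<phi>_def Polygamma_shift c_def)
  have "(\<lambda>t. h (ysh t) - h t) \<in> O[at_right 0](\<lambda>t. t ^ Suc (Suc K))"
    using B by (subst (asm) landau_o.big.in_cong[OF ev])
  from telescope_bigo[OF lim this] have "h \<in> O[at_right 0](\<lambda>t. t ^ Suc K)" .
  thus "\<exists>p. (\<forall>n\<le>K. coeff p n = fps_nth (Bor ((-fps_X)^i * b1)) n) \<and>
        (\<lambda>t. Polygamma (Suc i) (1/t + 1) - poly p t) \<in> O[at_right 0](\<lambda>t. t ^ Suc K)"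
    by (intro exI[of _ p]) (auto simp: p_def coeff_tp \<Phi>_def h_def[abs_def] \<phi>_def)
qed

lemma b1_0 [simp]: "fps_nth b1 0 = 1" by (simp add: b1_def)

lemma ev_pos_right: "eventually (\<lambda>t::real. t > 0) (at_right 0)"
  by (rule eventually_at_right_less)

lemma base_case:
  "(\<forall>i. asx (\<lambda>t. Dl (Suc 0) (0 + Suc i) (1/t + real (Suc 0))) (Bor ((-fps_X)^i * b1^(Suc 0)))) \<and>
   ((\<lambda>t. Dl (Suc 0) 0 (1/t + real (Suc 0)) + ln t) \<longlongrightarrow> harm 0) (at_right 0)"
proof (intro conjI allI)
  fix i
  have ev: "eventually (\<lambda>t. Polygamma (Suc i) (1/t + 1) = Dl (Suc 0) (0 + Suc i) (1/t + real (Suc 0))) (at_right 0)"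
    using ev_pos_right by eventually_elim (subst Dl_1, auto intro: add_pos_pos)
  show "asx (\<lambda>t. Dl (Suc 0) (0 + Suc i) (1/t + real (Suc 0))) (Bor ((-fps_X)^i * b1^(Suc 0)))"
    using asx_cong[OF asx_Polygamma_base ev] by simp
next
  have ev: "eventually (\<lambda>t. Digamma (1/t + 1) + ln t = Dl (Suc 0) 0 (1/t + real (Suc 0)) + ln t) (at_right 0)"
    using ev_pos_right by eventually_elim (subst Dl_1, auto intro: add_pos_pos)
  show "((\<lambda>t. Dl (Suc 0) 0 (1/t + real (Suc 0)) + ln t) \<longlongrightarrow> harm 0) (at_right 0)"
    using tendsto_cong[OF ev] Digamma_ln_tendsto by (simp add: harm_def)
qed

lemma ysh_pos: "t > 0 \<Longrightarrow> ysh t > 0" by (simp add: ysh_def)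
lemma inv_ysh: "t > 0 \<Longrightarrow> 1 / ysh t = 1/t + 1" by (simp add: ysh_def field_simps)

lemma step_case:
  assumes IH: "\<forall>i. asx (\<lambda>t. Dl (Suc k) (k + Suc i) (1/t + real (Suc k))) (Bor ((-fps_X)^i * b1^(Suc k)))"
    and IHl: "((\<lambda>t. Dl (Suc k) k (1/t + real (Suc k)) + ln t) \<longlongrightarrow> harm k) (at_right 0)"
  shows "(\<forall>i. asx (\<lambda>t. Dl (Suc (Suc k)) (Suc k + Suc i) (1/t + real (Suc (Suc k)))) (Bor ((-fps_X)^i * b1^(Suc (Suc k))))) \<and>
   ((\<lambda>t. Dl (Suc (Suc k)) (Suc k) (1/t + real (Suc (Suc k))) + ln t) \<longlongrightarrow> harm (Suc k)) (at_right 0)"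
proof (intro conjI allI)
  fix i
  define A where "A = (\<lambda>j s. Dl (Suc k) (k + Suc j) (1/s + real (Suc k)))"
  have IHA: "asx (A j) (Bor ((-fps_X)^j * b1^(Suc k)))" for j unfolding A_def using IH by blast
  define n where "n = Suc k + Suc i"
  define g where "g s = (1 / real (Suc k)) * (A (Suc i) s / s + real n * A i s)" for s
  define G where "G = fps_const (1 / real (Suc k)) * (fps_shift 1 (Bor ((-fps_X)^(Suc i) * b1^(Suc k)))
      + fps_const (real n) * Bor ((-fps_X)^i * b1^(Suc k)))"
  have ag: "asx g G" unfolding g_def G_def
    by (intro asx_cmult asx_add asx_div_X IHA) simp_all
  have "asx (\<lambda>t. g (ysh t)) (G oo Ysh)"
    by (rule asx_compose[OF ag asx_ysh Ysh_0 filterlim_ysh])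
  moreover have "G oo Ysh = Bor ((-fps_X)^i * b1^(Suc (Suc k)))"
  proof -
    have "G = Bor (fps_const (1 / real (Suc k)) * (fps_deriv ((-fps_X)^(Suc i) * b1^(Suc k))
            + fps_const (real (Suc i + Suc k)) * ((-fps_X)^i * b1^(Suc k))))"
      unfolding G_def Bor_shift1 by (simp add: Bor_add Bor_cmult n_def add.commute)
    hence "G oo Ysh = Bor (fps_const (1 / real (Suc k)) * (fps_deriv ((-fps_X)^(Suc i) * b1^(Suc k))
            + fps_const (real (Suc i + Suc k)) * ((-fps_X)^i * b1^(Suc k))) * fps_exp (-1))"
      by (simp add: Bor_shift)
    also have "\<dots> = Bor ((-fps_X)^i * b1^(Suc (Suc k)))"
      using K4[of "Suc k" i] by (simp add: mult.commute)
    finally show ?thesis .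
  qed
  moreover have "eventually (\<lambda>t. g (ysh t) = Dl (Suc (Suc k)) (Suc k + Suc i) (1/t + real (Suc (Suc k)))) (at_right 0)"
    using ev_pos_right
  proof eventually_elim
    case (elim t)
    have x: "1/t + real (Suc (Suc k)) > 0" using elim by (intro add_pos_nonneg) auto
    have e1: "1/t + real (Suc (Suc k)) - real (Suc k) = 1 / ysh t" using elim by (simp add: inv_ysh)
    have e2: "1/t + real (Suc (Suc k)) = 1 / ysh t + real (Suc k)" using elim by (simp add: inv_ysh)
    show ?case unfolding Dl_rec[OF x] e1 unfolding e2
      by (simp add: g_def A_def n_def divide_inverse algebra_simps)
  qed
  ultimately show "asx (\<lambda>t. Dl (Suc (Suc k)) (Suc k + Suc i) (1/t + real (Suc (Suc k)))) (Bor ((-fps_X)^i * b1^(Suc (Suc k))))"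
    by (auto intro: asx_cong)
next
  define A0 where "A0 = (\<lambda>s. Dl (Suc k) (k + Suc 0) (1/s + real (Suc k)))"
  have a0: "asx A0 (Bor (b1^(Suc k)))" unfolding A0_def using IH[rule_format, of 0] by simp
  have "asx (\<lambda>s. A0 s / s) (fps_shift 1 (Bor (b1^(Suc k))))" by (rule asx_div_X[OF a0]) simp
  from asx_tendsto[OF this] have l1: "((\<lambda>s. A0 s / s) \<longlongrightarrow> 1) (at_right 0)" by (simp add: fps_nth_power_0)
  have l2: "((\<lambda>t. Dl (Suc k) k (1/ysh t + real (Suc k)) + ln (ysh t)) \<longlongrightarrow> harm k) (at_right 0)"
    by (rule filterlim_compose[OF IHl filterlim_ysh])
  have l3: "((\<lambda>t. A0 (ysh t) / ysh t) \<longlongrightarrow> 1) (at_right 0)"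
    by (rule filterlim_compose[OF l1 filterlim_ysh])
  have l4: "((\<lambda>t::real. ln (1 + t)) \<longlongrightarrow> 0) (at_right 0)"
    by (rule tendsto_eq_intros | simp)+
  have lim: "((\<lambda>t. (Dl (Suc k) k (1/ysh t + real (Suc k)) + ln (ysh t)) + ln (1 + t)
       + (1 / real (Suc k)) * (A0 (ysh t) / ysh t)) \<longlongrightarrow> harm k + 0 + (1 / real (Suc k)) * 1) (at_right 0)"
    by (intro tendsto_intros l2 l3 l4)
  have ev: "eventually (\<lambda>t. (Dl (Suc k) k (1/ysh t + real (Suc k)) + ln (ysh t)) + ln (1 + t)
       + (1 / real (Suc k)) * (A0 (ysh t) / ysh t) = Dl (Suc (Suc k)) (Suc k) (1/t + real (Suc (Suc k))) + ln t) (at_right 0)"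
    using ev_pos_right
  proof eventually_elim
    case (elim t)
    have x: "1/t + real (Suc (Suc k)) > 0" using elim by (intro add_pos_nonneg) auto
    have e1: "1/t + real (Suc (Suc k)) - real (Suc k) = 1 / ysh t" using elim by (simp add: inv_ysh)
    have e2: "1/t + real (Suc (Suc k)) = 1 / ysh t + real (Suc k)" using elim by (simp add: inv_ysh)
    have ln: "ln (ysh t) + ln (1 + t) = ln t" using elim
      by (simp add: ysh_def ln_div add_pos_pos)
    have yp: "ysh t > 0" using elim by (rule ysh_pos)
    have kk: "inverse (1 + real k) * D + real k * (inverse (1 + real k) * D) = D" for D
    proof -
      have "inverse (1 + real k) * D + real k * (inverse (1 + real k) * D) = ((1 + real k) * inverse (1 + real k)) * D"
        by (simp add: algebra_simps)
      also have "(1 + real k) * inverse (1 + real k) = 1" by (simp add: add_pos_nonneg)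
      finally show ?thesis by simp
    qed
    show ?case unfolding Dl_rec[OF x] e1 unfolding e2 using ln yp
      by (simp add: A0_def divide_inverse algebra_simps kk)
  qed
  show "((\<lambda>t. Dl (Suc (Suc k)) (Suc k) (1/t + real (Suc (Suc k))) + ln t) \<longlongrightarrow> harm (Suc k)) (at_right 0)"
    using tendsto_cong[OF ev] lim by (simp add: harm_Suc add_ac inverse_eq_divide)
qed

lemma main_induction:
  "(\<forall>i. asx (\<lambda>t. Dl (Suc k) (k + Suc i) (1/t + real (Suc k))) (Bor ((-fps_X)^i * b1^(Suc k)))) \<and>
   ((\<lambda>t. Dl (Suc k) k (1/t + real (Suc k)) + ln t) \<longlongrightarrow> harm k) (at_right 0)"
proof (induction k)
  case 0 show ?case using base_case by simp
next
  case (Suc k) thus ?case using step_case by blast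
qed

lemma higher_pderiv_small: "degree (p :: real poly) < n \<Longrightarrow> (pderiv ^^ n) p = 0"
  by (rule poly_eqI) (simp add: coeff_higher_pderiv coeff_eq_0)

lemma smooth0_minus_poly:
  assumes g: "smooth0 g"
  shows "x > 0 \<Longrightarrow> (deriv ^^ n) (\<lambda>y. g y - poly q y) x = (deriv ^^ n) g x - poly ((pderiv ^^ n) q) x"
proof (induction n arbitrary: x)
  case 0 thus ?case by simp
next
  case (Suc n)
  have ev: "eventually (\<lambda>y. (deriv ^^ n) (\<lambda>y. g y - poly q y) y = (deriv ^^ n) g y - poly ((pderiv ^^ n) q) y) (nhds x)"
    using ev_pos_nhds[OF Suc.prems] by eventually_elim (rule Suc.IH)
  have d: "((\<lambda>y. (deriv ^^ n) g y - poly ((pderiv ^^ n) q) y) has_real_derivative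
            (deriv ^^ Suc n) g x - poly (pderiv ((pderiv ^^ n) q)) x) (at x)"
    using g Suc.prems unfolding smooth0_def by (intro DERIV_diff poly_DERIV) auto
  have "(deriv ^^ Suc n) (\<lambda>y. g y - poly q y) x = deriv (\<lambda>y. (deriv ^^ n) g y - poly ((pderiv ^^ n) q) y) x"
    by (simp only: funpow.simps o_apply) (rule deriv_cong_ev[OF ev refl])
  also have "\<dots> = (deriv ^^ Suc n) g x - poly (pderiv ((pderiv ^^ n) q)) x" by (rule DERIV_imp_deriv[OF d])
  finally show ?case by simp
qed

lemma Digamma_shift_sum:
  assumes y: "(y::real) > 0"
  shows "Digamma (y + real j) = Digamma y + (\<Sum>i<j. 1 / (y + real i))"
proof (induction j)
  case 0 thus ?case by simp
next
  case (Suc j)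
  have "y + real j \<noteq> 0" using y by simp
  hence "Digamma (y + real j + 1) = Digamma (y + real j) + 1 / (y + real j)" by (rule Digamma_plus1)
  thus ?case using Suc by (simp add: add_ac)
qed

definition cK :: "nat \<Rightarrow> real" where "cK k = (\<Prod>i=0..<k. real (k - i))"
definition sK :: "nat \<Rightarrow> nat \<Rightarrow> nat \<Rightarrow> real poly" where
  "sK k m i = smult (1 / cK k) (\<Prod>j\<in>{0..<k} - {m - i - 1}. [:-(1 + real j), 1:])"
definition QK :: "nat \<Rightarrow> nat \<Rightarrow> real poly" where "QK k m = (\<Sum>i<m. sK k m i)"

lemma cK_nz: "cK k \<noteq> 0" unfolding cK_def by (auto simp: prod_zero_iff)

lemma gchoose_prod: "(a::real) gchoose k = (\<Prod>i=0..<k. a - real i) / cK k"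
  unfolding gbinomial_altdef_of_nat cK_def by (simp add: prod_dividef)

lemma pderiv_QK: assumes "m \<le> k" shows "(pderiv ^^ k) (QK k m) = 0"
proof (cases "m = 0")
  case True thus ?thesis by (simp add: QK_def)
next
  case False
  hence k: "k \<ge> 1" using assms by simp
  have "degree (QK k m) \<le> k - 1" unfolding QK_def
  proof (rule degree_sum_le)
    fix i assume i: "i \<in> {..<m}"
    have "degree (sK k m i) \<le> degree (\<Prod>j\<in>{0..<k} - {m - i - 1}. [:-(1 + real j), 1:])"
      unfolding sK_def by (rule degree_smult_le)
    also have "\<dots> \<le> sum (degree \<circ> (\<lambda>j. [:-(1 + real j), 1:])) ({0..<k} - {m - i - 1})"
      by (rule degree_prod_sum_le) simp
    also have "\<dots> = card ({0..<k} - {m - i - 1})" by simp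
    also have "\<dots> = k - 1" using i assms by (subst card_Diff_singleton) auto
    finally show "degree (sK k m i) \<le> k - 1" .
  qed simp
  hence "degree (QK k m) < k" using k by linarith
  thus ?thesis by (rule higher_pderiv_small)
qed

lemma shift_eq:
  assumes m: "m \<le> k" and x: "x > real k"
  shows "((x - 1) gchoose k) * Digamma (x - real m) = hfun (Suc k) x - poly (QK k m) x"
proof -
  define y where "y = x - real m"
  have y: "y > 0" using m x by (simp add: y_def)
  have xy: "x = y + real m" by (simp add: y_def)
  have P: "(x - 1) gchoose k = (\<Prod>j=0..<k. x - 1 - real j) / cK k" by (simp add: gchoose_prod)
  have trm: "((x - 1) gchoose k) * (1 / (y + real i)) = poly (sK k m i) x" if i: "i < m" for i
  proof -
    have mem: "m - i - 1 \<in> {0..<k}" using i m by auto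
    have "(\<Prod>j=0..<k. x - 1 - real j) = (x - 1 - real (m - i - 1)) * (\<Prod>j\<in>{0..<k} - {m - i - 1}. x - 1 - real j)"
      using mem by (subst prod.remove[of _ "m - i - 1"]) auto
    also have "x - 1 - real (m - i - 1) = y + real i" using i by (simp add: xy of_nat_diff)
    finally have e: "(\<Prod>j=0..<k. x - 1 - real j) = (y + real i) * (\<Prod>j\<in>{0..<k} - {m - i - 1}. x - 1 - real j)" .
    have yi: "y + real i \<noteq> 0" using y by simp
    have gen: "\<And>a b c::real. a \<noteq> 0 \<Longrightarrow> c \<noteq> 0 \<Longrightarrow> a * b / c * (1 / a) = (1 / c) * b"
      by (simp add: field_simps)
    have pp: "poly (\<Prod>j\<in>{0..<k} - {m - i - 1}. [:-(1 + real j), 1:]) x = (\<Prod>j\<in>{0..<k} - {m - i - 1}. x - 1 - real j)"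
      by (simp add: poly_prod) (rule prod.cong, auto)
    show ?thesis unfolding P e sK_def poly_smult pp by (rule gen[OF yi cK_nz])
  qed
  have "Digamma x = Digamma y + (\<Sum>i<m. 1 / (y + real i))" unfolding xy by (rule Digamma_shift_sum[OF y])
  hence "((x - 1) gchoose k) * Digamma (x - real m) = ((x - 1) gchoose k) * Digamma x - (\<Sum>i<m. ((x - 1) gchoose k) * (1 / (y + real i)))"
    by (simp add: y_def[symmetric] sum_distrib_left algebra_simps)
  also have "(\<Sum>i<m. ((x - 1) gchoose k) * (1 / (y + real i))) = poly (QK k m) x"
    unfolding QK_def poly_sum by (rule sum.cong[OF refl]) (use trm in blast)
  finally show ?thesis by (simp add: hfun_def)
qed

lemma deriv_shift_eq:
  assumes m: "m \<le> k" and x: "x > real k"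
  shows "(deriv ^^ k) (\<lambda>x. ((x - 1) gchoose k) * Digamma (x - real m)) x = Dl (Suc k) k x"
proof -
  have ev: "eventually (\<lambda>y. ((y - 1) gchoose k) * Digamma (y - real m) = hfun (Suc k) y - poly (QK k m) y) (nhds x)"
    using eventually_nhds_in_open[of "{real k<..}" x] x by (auto elim!: eventually_mono intro: shift_eq[OF m])
  have x0: "x > 0" using x by (meson le_less_trans of_nat_0_le_iff)
  have "(deriv ^^ k) (\<lambda>x. ((x - 1) gchoose k) * Digamma (x - real m)) x = (deriv ^^ k) (\<lambda>y. hfun (Suc k) y - poly (QK k m) y) x"
    by (rule higher_deriv_cong_ev[OF ev refl])
  also have "\<dots> = Dl (Suc k) k x - poly ((pderiv ^^ k) (QK k m)) x"
    unfolding Dl_def by (rule smooth0_minus_poly[OF smooth0_hfun x0])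
  also have "(pderiv ^^ k) (QK k m) = 0" by (rule pderiv_QK[OF m])
  finally show ?thesis by simp
qed

definition Fk :: "nat \<Rightarrow> real fps" where
  "Fk k = fps_integral (fps_shift 1 (1 - fps_shift 1 (Bor (b1^(Suc k))))) (harm k)"

lemma asx_kf: "asx (\<lambda>t. Dl (Suc k) k (1/t + real (Suc k)) + ln t) (Fk k)"
  unfolding Fk_def
proof (rule asx_integrate[where \<delta> = 1])
  define A0 where "A0 = (\<lambda>t. Dl (Suc k) (Suc k) (1/t + real (Suc k)))"
  have a0: "asx A0 (Bor (b1^(Suc k)))" unfolding A0_def
    using conjunct1[OF main_induction[of k], rule_format, of 0] by simp
  have "asx (\<lambda>t. A0 t / t) (fps_shift 1 (Bor (b1^(Suc k))))" by (rule asx_div_X[OF a0]) simp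
  hence "asx (\<lambda>t. 1 - A0 t / t) (fps_const 1 - fps_shift 1 (Bor (b1^(Suc k))))"
    by (rule asx_diff[OF asx_const])
  hence "asx (\<lambda>t. (1 - A0 t / t) / t) (fps_shift 1 (fps_const 1 - fps_shift 1 (Bor (b1^(Suc k)))))"
    by (rule asx_div_X) (simp add: fps_nth_power_0)
  thus "asx (\<lambda>t. (1 - A0 t / t) / t) (fps_shift 1 (1 - fps_shift 1 (Bor (b1^(Suc k)))))" by simp
  show "((\<lambda>t. Dl (Suc k) k (1/t + real (Suc k)) + ln t) \<longlongrightarrow> harm k) (at_right 0)"
    using conjunct2[OF main_induction[of k]] .
  fix t :: real assume t: "0 < t" "t < 1"
  have x: "1/t + real (Suc k) > 0" using t by (intro add_pos_nonneg) auto
  have d1: "((\<lambda>t. 1/t + real (Suc k)) has_real_derivative (- (1 / t^2))) (at t)"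
    using t by (auto intro!: derivative_eq_intros simp: power2_eq_square field_simps)
  have d: "((\<lambda>t. Dl (Suc k) k (1/t + real (Suc k)) + ln t) has_real_derivative
      Dl (Suc k) (Suc k) (1/t + real (Suc k)) * (- (1 / t^2)) + inverse t) (at t)"
    by (intro DERIV_add DERIV_chain2[OF Dl_deriv[OF x] d1] DERIV_ln t)
  show "((\<lambda>t. Dl (Suc k) k (1/t + real (Suc k)) + ln t) has_real_derivative (1 - A0 t / t) / t) (at t)"
    by (rule DERIV_cong[OF d]) (use t in \<open>simp add: A0_def field_simps power2_eq_square\<close>)
qed simp

lemma norlund_b1: "norlund l r = fact r * fps_nth (b1 ^ l) r"
  by (simp add: norlund_def b1_def Dfps_def)

lemma Fk_nth_0: "fps_nth (Fk k) 0 = harm k" by (simp add: Fk_def)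

lemma Fk_nth_Suc: "fps_nth (Fk k) (Suc n) = - norlund (Suc k) (Suc n) / real (Suc n)"
  by (simp add: Fk_def norlund_b1 field_simps)


definition Vz :: "real \<Rightarrow> real" where "Vz z = z / (1 - z)^2"
definition Vf :: "real fps" where "Vf = fps_X * inverse ((1 - fps_X)^2)"
definition Gone :: "real fps" where "Gone = Abs_fps (\<lambda>_. 1)"

lemma asx_Vz: "asx Vz Vf"
proof -
  have "asx (\<lambda>t. t * inverse ((1 - t)^2)) (fps_X * inverse ((fps_const 1 - fps_X)^2))"
    by (intro asx_mult asx_X asx_inverse asx_power asx_diff asx_const) (simp add: fps_nth_power_0)
  thus ?thesis unfolding Vz_def Vf_def by (simp add: divide_inverse)
qed

lemma Vf_0 [simp]: "fps_nth Vf 0 = 0" by (simp add: Vf_def)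

lemma filterlim_Vz: "filterlim Vz (at_right 0) (at_right 0)"
proof -
  have "(Vz \<longlongrightarrow> 0) (at_right 0)" unfolding Vz_def by (auto intro!: tendsto_eq_intros)
  moreover have "eventually (\<lambda>t. Vz t \<in> {0<..}) (at_right (0::real))"
    by (auto simp: eventually_at_right_field Vz_def intro!: exI[of _ 1])
  ultimately show ?thesis by (auto simp: filterlim_at elim: eventually_mono)
qed

lemma inverse_one_minus_X: "inverse (1 - fps_X) = Gone"
proof -
  have "inverse Gone = 1 - fps_X" unfolding Gone_def by (rule fps_inverse_gp')
  hence "inverse (1 - fps_X) = inverse (inverse Gone)" by simp
  also have "\<dots> = Gone" by (rule fps_inverse_idempotent) (simp add: Gone_def)
  finally show ?thesis .
qed

lemma choose_sym_add: "(i + j) choose j = (j + i) choose i"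
  using binomial_symmetric[of i "j + i"] by (simp add: add.commute)

lemma Gone_power_nth: "fps_nth (Gone ^ Suc j) n = real ((n + j) choose j)"
proof (induction j arbitrary: n)
  case 0 thus ?case by (simp add: Gone_def)
next
  case (Suc j)
  have "fps_nth (Gone ^ Suc (Suc j)) n = fps_nth (Gone ^ Suc j * Gone) n" by (simp only: power_Suc2)
  also have "\<dots> = (\<Sum>i\<le>n. real ((j + i) choose i))"
    by (simp only: fps_mult_nth Suc.IH) (simp add: Gone_def atLeast0AtMost choose_sym_add)
  also have "\<dots> = real (\<Sum>i\<le>n. (j + i) choose i)" by simp
  also have "(\<Sum>i\<le>n. (j + i) choose i) = Suc (j + n) choose n" by (rule sum_choose_lower)
  also have "\<dots> = (n + Suc j) choose Suc j" using choose_sym_add[of n "Suc j"] by (simp add: add_ac)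
  finally show ?case .
qed

lemma Vf_power_nth:
  assumes "1 \<le> r" "r \<le> n"
  shows "fps_nth (Vf ^ r) n = real ((n + r - 1) choose (2*r - 1))"
proof -
  have "Vf ^ r = fps_X ^ r * Gone ^ Suc (2*r - 1)"
  proof -
    have "inverse ((1 - fps_X :: real fps)^2) = Gone^2"
      by (simp add: fps_inverse_power inverse_one_minus_X)
    moreover have "Suc (2*r - 1) = 2 * r" using assms by simp
    ultimately show ?thesis by (simp add: Vf_def power_mult_distrib power_mult)
  qed
  hence "fps_nth (Vf ^ r) n = fps_nth (Gone ^ Suc (2*r - 1)) (n - r)" using assms
    by (simp add: fps_X_power_mult_nth)
  also have "\<dots> = real ((n - r + (2*r - 1)) choose (2*r - 1))" by (rule Gone_power_nth)
  also have "n - r + (2*r - 1) = n + r - 1" using assms by simp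
  finally show ?thesis .
qed

lemma asx_mlog: "asx (\<lambda>z. - ln (1 - z)) (fps_integral Gone 0)"
proof (rule asx_integrate[where \<delta> = 1])
  have "asx (\<lambda>z. inverse (1 - z)) (inverse (fps_const 1 - fps_X))"
    by (intro asx_inverse asx_diff asx_const asx_X) simp
  thus "asx (\<lambda>z. inverse (1 - z)) Gone" by (simp add: inverse_one_minus_X)
  show "((\<lambda>z. - ln (1 - z)) \<longlongrightarrow> 0) (at_right (0::real))"
    by (rule tendsto_eq_intros refl | simp)+
  fix z :: real assume z: "0 < z" "z < 1"
  show "((\<lambda>z. - ln (1 - z)) has_real_derivative inverse (1 - z)) (at z)"
    using z by (auto intro!: derivative_eq_intros simp: field_simps)
qed simp

lemma mlog_nth: "fps_nth (fps_integral Gone 0) (Suc n) = 1 / real (Suc n)"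
  by (simp add: Gone_def divide_inverse)


lemma norlund_0: "norlund l 0 = 1"
  by (simp add: norlund_b1 fps_nth_power_0)

lemma binom_ratio:
  assumes "1 \<le> r" "r \<le> n"
  shows "real ((n + r) choose (2*r)) / real (n + r) = real ((n + r - 1) choose (2*r - 1)) / (2 * real r)"
proof -
  have "(2*r) * ((n + r) choose (2*r)) = (n + r) * ((n + r - 1) choose (2*r - 1))"
    using assms by (intro times_binomial_minus1_eq) auto
  hence "2 * real r * real ((n + r) choose (2*r)) = real (n + r) * real ((n + r - 1) choose (2*r - 1))"
    by (metis of_nat_mult of_nat_numeral)
  moreover have "real (n + r) > 0" "real r > 0" using assms by auto
  ultimately show ?thesis by (simp add: field_simps)
qed

lemma coeff_R:
  assumes n: "n \<ge> 1"
  shows "- (1/2) * fps_nth (Fk k oo Vf) n + fps_nth (fps_integral Gone 0) n = norlund_star (Suc k) n"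
proof -
  obtain n' where n': "n = Suc n'" using n by (cases n) auto
  have "fps_nth (Fk k oo Vf) n = (\<Sum>r=0..n. fps_nth (Fk k) r * fps_nth (Vf ^ r) n)" by (rule fps_compose_nth)
  also have "\<dots> = fps_nth (Fk k) 0 * fps_nth (Vf ^ 0) n + (\<Sum>r=1..n. fps_nth (Fk k) r * fps_nth (Vf ^ r) n)"
    by (subst sum.atLeast_Suc_atMost) auto
  also have "fps_nth (Vf ^ 0) n = 0" using n by simp
  also have "(\<Sum>r=1..n. fps_nth (Fk k) r * fps_nth (Vf ^ r) n) =
      (\<Sum>r=1..n. - norlund (Suc k) r / real r * real ((n + r - 1) choose (2*r - 1)))"
  proof (rule sum.cong[OF refl])
    fix r assume r: "r \<in> {1..n}"
    then obtain r' where r': "r = Suc r'" by (cases r) auto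
    show "fps_nth (Fk k) r * fps_nth (Vf ^ r) n = - norlund (Suc k) r / real r * real ((n + r - 1) choose (2*r - 1))"
    proof -
      have "fps_nth (Vf^r) n = real ((n + r - 1) choose (2*r - 1))" by (rule Vf_power_nth) (use r in auto)
      moreover have "fps_nth (Fk k) r = - norlund (Suc k) r / real r" unfolding r' by (rule Fk_nth_Suc)
      ultimately show ?thesis by (simp only:)
    qed
  qed
  finally have c: "fps_nth (Fk k oo Vf) n = (\<Sum>r=1..n. - norlund (Suc k) r / real r * real ((n + r - 1) choose (2*r - 1)))"
    by simp
  have "norlund_star (Suc k) n = real ((n + 0) choose (2 * 0)) * norlund (Suc k) 0 / real (n + 0) +
      (\<Sum>r=1..n. real ((n + r) choose (2 * r)) * norlund (Suc k) r / real (n + r))"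
    unfolding norlund_star_def by (subst sum.atLeast_Suc_atMost) auto
  also have "(\<Sum>r=1..n. real ((n + r) choose (2 * r)) * norlund (Suc k) r / real (n + r)) =
      (\<Sum>r=1..n. - (1/2) * (- norlund (Suc k) r / real r * real ((n + r - 1) choose (2*r - 1))))"
  proof (rule sum.cong[OF refl])
    fix r assume r: "r \<in> {1..n}"
    have "real ((n + r) choose (2 * r)) * norlund (Suc k) r / real (n + r) =
        norlund (Suc k) r * (real ((n + r) choose (2*r)) / real (n + r))" by simp
    also have "\<dots> = norlund (Suc k) r * (real ((n + r - 1) choose (2*r - 1)) / (2 * real r))"
      using r by (subst binom_ratio) auto
    finally show "real ((n + r) choose (2 * r)) * norlund (Suc k) r / real (n + r) =
        - (1/2) * (- norlund (Suc k) r / real r * real ((n + r - 1) choose (2*r - 1)))" by simp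
  qed
  finally have ns: "norlund_star (Suc k) n = real ((n + 0) choose (2 * 0)) * norlund (Suc k) 0 / real (n + 0) +
      (\<Sum>r=1..n. - (1/2) * (- norlund (Suc k) r / real r * real ((n + r - 1) choose (2*r - 1))))" .
  have m: "fps_nth (fps_integral Gone 0) n = 1 / real n" using mlog_nth[of n'] by (simp add: n')
  show ?thesis unfolding c m ns by (simp add: norlund_0 sum_distrib_left)
qed


lemma rhs_eq:
  assumes z: "0 < z" "z < 1"
  shows "rhs_fun (Suc k) z = harm k / 2 - (1/2) * (Dl (Suc k) k (1 / Vz z + real (Suc k)) + ln (Vz z)) + - ln (1 - z)"
proof -
  define x where "x = z + 1 / z + real (Suc k) - 2"
  have zz: "z + 1/z > 1"
  proof -
    have "1/z > 1" using z by (simp add: field_simps)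
    thus ?thesis using z by linarith
  qed
  have xk: "x > real k" using zz by (simp add: x_def)
  have m: "Suc k div 2 \<le> k" by simp
  have D: "(deriv ^^ k) (\<lambda>x. ((x - 1) gchoose k) * Digamma (x - real (Suc k div 2))) x = Dl (Suc k) k x"
    by (rule deriv_shift_eq[OF m xk])
  have vx: "1 / Vz z + real (Suc k) = x" using z by (simp add: Vz_def x_def field_simps power2_eq_square)
  have lnv: "ln (Vz z) = ln z - 2 * ln (1 - z)" using z by (simp add: Vz_def ln_div ln_realpow)
  have "rhs_fun (Suc k) z = - ln z / 2 + (harm k - Dl (Suc k) k x) / 2"
    unfolding rhs_fun_def using D by (simp add: x_def)
  thus ?thesis unfolding vx lnv by (simp add: field_simps)
qed

theorem theorem1p2:
  fixes l :: nat
  assumes "l \<ge> 1"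
  shows "\<forall>N::nat. (\<lambda>z. rhs_fun l z - (\<Sum>n=1..N. norlund_star l n * z ^ n))
            \<in> O[at_right 0](\<lambda>z. z ^ (N + 1))"
proof
  fix N :: nat
  obtain k where l: "l = Suc k" using assms by (cases l) auto
  define R where "R = fps_const (harm k / 2) - fps_const (1/2) * (Fk k oo Vf) + fps_integral Gone 0"
  have a1: "asx (\<lambda>z. harm k / 2 - (1/2) * (Dl (Suc k) k (1 / Vz z + real (Suc k)) + ln (Vz z)) + - ln (1 - z)) R"
    unfolding R_def
  proof -
    have kc: "asx (\<lambda>t. Dl (Suc k) k (1 / Vz t + real (Suc k)) + ln (Vz t)) (Fk k oo Vf)"
      by (rule asx_compose[OF asx_kf asx_Vz Vf_0 filterlim_Vz])
    show "asx (\<lambda>z. harm k / 2 - (1/2) * (Dl (Suc k) k (1 / Vz z + real (Suc k)) + ln (Vz z)) + - ln (1 - z))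
      (fps_const (harm k / 2) - fps_const (1/2) * (Fk k oo Vf) + fps_integral Gone 0)"
      by (intro asx_add asx_diff asx_const asx_cmult asx_mlog kc)
  qed
  have ev: "eventually (\<lambda>z. harm k / 2 - (1/2) * (Dl (Suc k) k (1 / Vz z + real (Suc k)) + ln (Vz z)) + - ln (1 - z)
        = rhs_fun l z) (at_right 0)"
    by (auto simp: eventually_at_right_field l rhs_eq intro!: exI[of _ 1])
  have a2: "asx (rhs_fun l) R" by (rule asx_cong[OF a1 ev])
  define p where "p = (\<Sum>n\<in>{1..N}. monom (norlund_star l n) n)"
  have coeffs: "\<forall>n\<le>N. coeff p n = fps_nth R n"
  proof (intro allI impI)
    fix n assume n: "n \<le> N"
    show "coeff p n = fps_nth R n"
    proof (cases "n = 0")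
      case True thus ?thesis by (simp add: p_def coeff_sum R_def Fk_nth_0)
    next
      case False
      hence "coeff p n = norlund_star l n" using n by (simp add: p_def coeff_sum)
      also have "\<dots> = - (1/2) * fps_nth (Fk k oo Vf) n + fps_nth (fps_integral Gone 0) n"
        using coeff_R[of n k] False by (simp add: l)
      also have "\<dots> = fps_nth R n" using False by (simp add: R_def)
      finally show ?thesis .
    qed
  qed
  have "(\<lambda>z. rhs_fun l z - poly p z) \<in> O[at_right 0](\<lambda>z. z ^ Suc N)" by (rule asxD[OF a2 coeffs])
  moreover have "poly p z = (\<Sum>n=1..N. norlund_star l n * z ^ n)" for z
    by (simp add: p_def poly_sum poly_monom)
  ultimately show "(\<lambda>z. rhs_fun l z - (\<Sum>n=1..N. norlund_star l n * z ^ n)) \<in> O[at_right 0](\<lambda>z. z ^ (N + 1))"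
    by simp
qed

end
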